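(* Fix arms $i,j$ and any bandit algorithm. Let $H_t:=\mathbb E[\mu_i\mid\mathcal F_t]\cdot\Pr[A^*=j\mid\mathcal F_t]$. Then the sequence $(H_1,\dots,H_T)$ is a supermartingale (with respect to $(\mathcal F_t)$) if $i\neq j$, and a submartingale if $i=j$.
   Context: Bayesian bandit with Bernoulli rewards and independent priors: $K$ arms; $\mu_1,\dots,\mu_K\in[0,1]$ drawn independently, $\mu_i\sim\mathcal P_i$. Given the means, each arm $i$ has an i.i.d. sequence of $\{0,1\}$-valued samples with mean $\mu_i$; the $n$-th time arm $i$ is chosen its $n$-th sample is observed. The algorithm chooses one arm per round (possibly randomized) based on past arms and rewards, for $T$ rounds. $\mathcal F_t$ is the $\sigma$-algebra generated by chosen arms and rewards before round $t$. $A^*=\min(\arg\max_k\mu_k)$. *)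

theory Defs
  imports "HOL-Probability.Probability"
begin

text \<open>History of the first t rounds (rounds 1..t) of a bandit algorithm.
  alg s h r : arm chosen in round s given past history h and internal random seed r.
  z a n     : the n-th (0-indexed) sample of arm a.
  The n-th time arm a is chosen, its n-th sample is observed.\<close>
fun bandit_hist :: "(nat \<Rightarrow> (nat \<times> bool) list \<Rightarrow> 'r \<Rightarrow> nat) \<Rightarrow> (nat \<Rightarrow> nat \<Rightarrow> bool)
    \<Rightarrow> 'r \<Rightarrow> nat \<Rightarrow> (nat \<times> bool) list" where
  "bandit_hist alg z r 0 = []"
| "bandit_hist alg z r (Suc t) =
     (let h = bandit_hist alg z r t;
          a = alg (Suc t) h r;
          n = length (filter (\<lambda>p. fst p = a) h)
      in h @ [(a, z a n)])"

text \<open>F_t: sigma-algebra generated by the chosen arms and rewards before round t (t \<ge> 1).\<close>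
definition bandit_filtration ::
  "'a measure \<Rightarrow> (nat \<Rightarrow> (nat \<times> bool) list \<Rightarrow> 'r \<Rightarrow> nat) \<Rightarrow> (nat \<Rightarrow> nat \<Rightarrow> 'a \<Rightarrow> bool)
     \<Rightarrow> ('a \<Rightarrow> 'r) \<Rightarrow> nat \<Rightarrow> 'a measure" where
  "bandit_filtration M alg Z R t =
     vimage_algebra (space M) (\<lambda>\<omega>. bandit_hist alg (\<lambda>a n. Z a n \<omega>) (R \<omega>) (t - 1)) (count_space UNIV)"

definition best_arm :: "(nat \<Rightarrow> real) \<Rightarrow> nat \<Rightarrow> nat" where
  "best_arm mu K = (LEAST k. k < K \<and> (\<forall>l<K. mu l \<le> mu k))"

definition is_filtration :: "'a measure \<Rightarrow> (nat \<Rightarrow> 'a measure) \<Rightarrow> nat \<Rightarrow> bool" where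
  "is_filtration M F T \<longleftrightarrow>
     (\<forall>t\<in>{1..T}. subalgebra M (F t)) \<and> (\<forall>t\<in>{1..<T}. sets (F t) \<subseteq> sets (F (Suc t)))"

definition supermartingale :: "'a measure \<Rightarrow> (nat \<Rightarrow> 'a measure) \<Rightarrow> nat \<Rightarrow> (nat \<Rightarrow> 'a \<Rightarrow> real) \<Rightarrow> bool" where
  "supermartingale M F T X \<longleftrightarrow> is_filtration M F T \<and>
     (\<forall>t\<in>{1..T}. integrable M (X t) \<and> X t \<in> borel_measurable (F t)) \<and>
     (\<forall>t\<in>{1..<T}. AE \<omega> in M. real_cond_exp M (F t) (X (Suc t)) \<omega> \<le> X t \<omega>)"

definition submartingale :: "'a measure \<Rightarrow> (nat \<Rightarrow> 'a measure) \<Rightarrow> nat \<Rightarrow> (nat \<Rightarrow> 'a \<Rightarrow> real) \<Rightarrow> bool" where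
  "submartingale M F T X \<longleftrightarrow> is_filtration M F T \<and>
     (\<forall>t\<in>{1..T}. integrable M (X t) \<and> X t \<in> borel_measurable (F t)) \<and>
     (\<forall>t\<in>{1..<T}. AE \<omega> in M. real_cond_exp M (F t) (X (Suc t)) \<omega> \<ge> X t \<omega>)"

end

theory Submission
  imports Defs "HOL-Probability.Probability"
begin

lemma hist_len[simp]: "length (bandit_hist alg z r t) = t"
  by (induction t) (auto simp: Let_def)

lemma hist_Suc_butlast: "butlast (bandit_hist alg z r (Suc t)) = bandit_hist alg z r t"
  by (simp add: Let_def)

definition cnt :: "nat \<Rightarrow> (nat \<times> bool) list \<Rightarrow> nat" where
  "cnt s h = length (filter (\<lambda>p. fst p = fst (h!s)) (take s h))"

definition hist_ok :: "(nat \<Rightarrow> (nat \<times> bool) list \<Rightarrow> 'r \<Rightarrow> nat) \<Rightarrow> (nat \<Rightarrow> nat \<Rightarrow> bool)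
    \<Rightarrow> 'r \<Rightarrow> (nat \<times> bool) list \<Rightarrow> bool" where
  "hist_ok alg z r h \<longleftrightarrow> (\<forall>s<length h. fst (h!s) = alg (Suc s) (take s h) r \<and> snd (h!s) = z (fst (h!s)) (cnt s h))"

lemma hist_ok_snoc: "hist_ok alg z r (h @ [x]) \<longleftrightarrow> hist_ok alg z r h \<and>
   fst x = alg (Suc (length h)) h r \<and> snd x = z (fst x) (length (filter (\<lambda>p. fst p = fst x) h))"
  unfolding hist_ok_def cnt_def
  by (auto simp: nth_append less_Suc_eq)

lemma hist_eq_iff: "bandit_hist alg z r t = h \<longleftrightarrow> length h = t \<and> hist_ok alg z r h"
proof (induction t arbitrary: h)
  case 0
  then show ?case by (auto simp: hist_ok_def)
next
  case (Suc t)
  show ?case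
  proof
    assume h: "bandit_hist alg z r (Suc t) = h"
    then obtain x where hx: "h = bandit_hist alg z r t @ [x]" "fst x = alg (Suc t) (bandit_hist alg z r t) r"
      "snd x = z (fst x) (length (filter (\<lambda>p. fst p = fst x) (bandit_hist alg z r t)))"
      by (auto simp: Let_def)
    then show "length h = Suc t \<and> hist_ok alg z r h"
      using Suc.IH[of "bandit_hist alg z r t"] by (simp add: hist_ok_snoc)
  next
    assume h: "length h = Suc t \<and> hist_ok alg z r h"
    then obtain h0 x where hx: "h = h0 @ [x]"
      by (metis append_butlast_last_id length_0_conv nat.simps(3))
    with h have "length h0 = t" "hist_ok alg z r h0" "fst x = alg (Suc t) h0 r"
      "snd x = z (fst x) (length (filter (\<lambda>p. fst p = fst x) h0))"
      by (auto simp: hist_ok_snoc)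
    with Suc.IH[of h0] hx show "bandit_hist alg z r (Suc t) = h"
      by (cases x) (auto simp: Let_def)
  qed
qed


lemma (in prob_space) cond_exp_discrete:
  fixes Y :: "'a \<Rightarrow> 'b::countable" and X :: "'a \<Rightarrow> real"
  assumes Y[measurable]: "Y \<in> measurable M (count_space UNIV)"
    and fin: "finite S" and YS: "\<And>\<omega>. \<omega> \<in> space M \<Longrightarrow> Y \<omega> \<in> S"
    and X: "integrable M X"
  shows "AE \<omega> in M. real_cond_exp M (vimage_algebra (space M) Y (count_space UNIV)) X \<omega> =
      (\<integral>x. X x * indicator {x\<in>space M. Y x = Y \<omega>} x \<partial>M) / prob {x\<in>space M. Y x = Y \<omega>}"
proof -
  let ?F = "vimage_algebra (space M) Y (count_space UNIV)"
  have sub: "subalgebra M ?F"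
    unfolding subalgebra_def using sets_image_in_sets[OF refl Y] by auto
  interpret finite_measure_subalgebra M ?F
    by unfold_locales (rule sub)
  define c where "c h = (\<integral>x. X x * indicator {x\<in>space M. Y x = h} x \<partial>M) / prob {x\<in>space M. Y x = h}" for h
  have ev[measurable]: "{x\<in>space M. Y x = h} \<in> events" for h
    by measurable
  have Xm[measurable]: "X \<in> borel_measurable M" using X by auto
  have gF: "(\<lambda>\<omega>. c (Y \<omega>)) \<in> borel_measurable ?F"
    by (rule measurable_compose[OF measurable_vimage_algebra1]) auto
  have gsum: "c (Y \<omega>) = (\<Sum>h\<in>S. c h * indicator {x\<in>space M. Y x = h} \<omega>)" if "\<omega> \<in> space M" for \<omega>
    using that YS fin by (auto simp: indicator_def sum.delta)
  have gi: "integrable M (\<lambda>\<omega>. c (Y \<omega>))"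
  proof -
    have "integrable M (\<lambda>\<omega>. \<Sum>h\<in>S. c h * indicator {x\<in>space M. Y x = h} \<omega>)"
      apply (rule Bochner_Integration.integrable_sum)
      apply (rule integrable_mult_right)
      apply (rule integrable_real_indicator)
      using ev by (auto simp: emeasure_eq_measure)
    moreover have "integrable M (\<lambda>\<omega>. c (Y \<omega>)) = integrable M (\<lambda>\<omega>. \<Sum>h\<in>S. c h * indicator {x\<in>space M. Y x = h} \<omega>)"
      by (rule Bochner_Integration.integrable_cong) (auto simp: gsum)
    ultimately show ?thesis by simp
  qed
  have key: "(\<integral>x. indicator A x * c (Y x) \<partial>M) = (\<integral>x. indicator A x * X x \<partial>M)" if A: "A \<in> sets ?F" for A
  proof -
    obtain B where B: "A = Y -` B \<inter> space M"
      using A by (auto simp: sets_vimage_algebra2)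
    have e1: "indicator A x * c (Y x) = (\<Sum>h\<in>S\<inter>B. c h * indicator {x\<in>space M. Y x = h} x)" if "x \<in> space M" for x
      using that YS fin B by (auto simp: indicator_def sum.delta split: if_splits)
    have e2: "indicator A x * X x = (\<Sum>h\<in>S\<inter>B. X x * indicator {x\<in>space M. Y x = h} x)" if "x \<in> space M" for x
      using that YS fin B by (auto simp: indicator_def sum.delta split: if_splits)
    have i2: "integrable M (\<lambda>x. X x * indicator {x\<in>space M. Y x = h} x)" for h
      by (rule integrable_mult_indicator[THEN Bochner_Integration.integrable_cong[THEN iffD1, rotated -1]]) (auto simp: X mult.commute)
    have "(\<integral>x. indicator A x * c (Y x) \<partial>M) = (\<integral>x. (\<Sum>h\<in>S\<inter>B. c h * indicator {x\<in>space M. Y x = h} x) \<partial>M)"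
      by (rule Bochner_Integration.integral_cong[OF refl e1])
    also have "\<dots> = (\<Sum>h\<in>S\<inter>B. c h * prob {x\<in>space M. Y x = h})"
      by (subst Bochner_Integration.integral_sum) (auto simp: emeasure_eq_measure)
    also have "\<dots> = (\<Sum>h\<in>S\<inter>B. (\<integral>x. X x * indicator {x\<in>space M. Y x = h} x \<partial>M))"
    proof (rule sum.cong[OF refl])
      fix h
      show "c h * prob {x\<in>space M. Y x = h} = (\<integral>x. X x * indicator {x\<in>space M. Y x = h} x \<partial>M)"
      proof (cases "prob {x\<in>space M. Y x = h} = 0")
        case True
        then have "{x\<in>space M. Y x = h} \<in> null_sets M"
          by (simp add: emeasure_eq_measure null_sets_def)
        then have "AE x in M. X x * indicator {x\<in>space M. Y x = h} x = 0"
          by (rule AE_mp[OF AE_not_in]) (auto simp: indicator_def)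
        then have "(\<integral>x. X x * indicator {x\<in>space M. Y x = h} x \<partial>M) = 0"
          by (simp add: integral_eq_zero_AE)
        then show ?thesis using True by simp
      qed (simp add: c_def)
    qed
    also have "\<dots> = (\<integral>x. (\<Sum>h\<in>S\<inter>B. X x * indicator {x\<in>space M. Y x = h} x) \<partial>M)"
      by (subst Bochner_Integration.integral_sum) (auto intro: i2)
    also have "\<dots> = (\<integral>x. indicator A x * X x \<partial>M)"
      by (rule Bochner_Integration.integral_cong[OF refl e2[symmetric]])
    finally show ?thesis .
  qed
  have "AE \<omega> in M. real_cond_exp M ?F X \<omega> = c (Y \<omega>)"
    by (rule real_cond_exp_charact) (auto simp: set_lebesgue_integral_def key X gi gF)
  then show ?thesis by (simp add: c_def)
qed


lemma two_point_le:
  fixes u0 u1 v0 v1 w0 w1 :: real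
  assumes "0 \<le> u0" "u0 \<le> w0" "0 \<le> u1" "u1 \<le> w1" "0 \<le> v0" "v0 \<le> w0" "0 \<le> v1" "v1 \<le> w1"
    and D: "(u1 * w0 - u0 * w1) * (v1 * w0 - v0 * w1) \<le> 0"
  shows "u0 * v0/w0 + u1 * v1/w1 \<le> (u0+u1) * (v0+v1)/(w0+w1)"
proof (cases "w0 = 0 \<or> w1 = 0")
  case True
  then show ?thesis using assms by auto
next
  case False
  then have p: "w0 > 0" "w1 > 0" using assms by auto
  have "u0 * v0/w0 + u1 * v1/w1 - (u0+u1) * (v0+v1)/(w0+w1) = (u1 * w0 - u0 * w1) * (v1 * w0 - v0 * w1) / (w0 * w1 * (w0+w1))"
    using p by (simp add: field_simps)
  also have "\<dots> \<le> 0" using p D by (intro divide_nonpos_pos) auto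
  finally show ?thesis by simp
qed

lemma two_point_ge:
  fixes u0 u1 v0 v1 w0 w1 :: real
  assumes "0 \<le> u0" "u0 \<le> w0" "0 \<le> u1" "u1 \<le> w1" "0 \<le> v0" "v0 \<le> w0" "0 \<le> v1" "v1 \<le> w1"
    and D: "(u1 * w0 - u0 * w1) * (v1 * w0 - v0 * w1) \<ge> 0"
  shows "u0 * v0/w0 + u1 * v1/w1 \<ge> (u0+u1) * (v0+v1)/(w0+w1)"
proof (cases "w0 = 0 \<or> w1 = 0")
  case True
  then show ?thesis using assms by auto
next
  case False
  then have p: "w0 > 0" "w1 > 0" using assms by auto
  have "u0 * v0/w0 + u1 * v1/w1 - (u0+u1) * (v0+v1)/(w0+w1) = (u1 * w0 - u0 * w1) * (v1 * w0 - v0 * w1) / (w0 * w1 * (w0+w1))"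
    using p by (simp add: field_simps)
  also have "\<dots> \<ge> 0" using p D by (intro divide_nonneg_pos) auto
  finally show ?thesis by simp
qed


lemma best_arm_cong: "(\<And>k. k < K \<Longrightarrow> m k = m' k) \<Longrightarrow> best_arm m K = best_arm m' K"
  unfolding best_arm_def by (rule arg_cong[where f=Least]) (auto simp: fun_eq_iff)

lemma best_arm_iff:
  assumes K: "K \<ge> 1"
  shows "best_arm m K = j \<longleftrightarrow> j < K \<and> (\<forall>l<K. m l \<le> m j) \<and> (\<forall>k<j. \<exists>l<K. m k < m l)"
proof -
  let ?P = "\<lambda>k. k < K \<and> (\<forall>l<K. m l \<le> m k)"
  have ex: "\<exists>k. ?P k"
  proof -
    have fne: "finite (m ` {..<K})" "m ` {..<K} \<noteq> {}" using K by (auto simp: lessThan_empty_iff)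
    obtain k where "k < K" "m k = Max (m ` {..<K})"
      using Max_in[OF fne] by auto
    then show ?thesis using fne by (intro exI[of _ k]) auto
  qed
  show ?thesis
  proof
    assume "best_arm m K = j"
    then have j: "j = (LEAST k. ?P k)" unfolding best_arm_def by simp
    have Pj: "?P j" unfolding j using ex by (rule LeastI_ex)
    have nP: "\<not> ?P k" if "k < j" for k using not_less_Least[of k ?P] that j by blast
    have "\<exists>l<K. m k < m l" if k: "k < j" for k
    proof -
      have "k < K" using k Pj by simp
      then have "\<not> (\<forall>l<K. m l \<le> m k)" using nP[OF k] by blast
      then show ?thesis by (simp add: not_le)
    qed
    then show "j < K \<and> (\<forall>l<K. m l \<le> m j) \<and> (\<forall>k<j. \<exists>l<K. m k < m l)"
      using Pj by blast
  next
    assume h: "j < K \<and> (\<forall>l<K. m l \<le> m j) \<and> (\<forall>k<j. \<exists>l<K. m k < m l)"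
    show "best_arm m K = j" unfolding best_arm_def
    proof (rule Least_equality)
      show "?P j" using h by auto
      fix y assume Py: "?P y"
      show "j \<le> y"
      proof (rule ccontr)
        assume "\<not> j \<le> y"
        then have "y < j" by simp
        then obtain l where "l < K" "m y < m l" using h by blast
        with Py show False by force
      qed
    qed
  qed
qed

lemma best_arm_mono_other:
  assumes K: "K \<ge> 1" and ij: "i \<noteq> j" and xy: "x \<le> y"
    and b: "best_arm (m(i:=y)) K = j"
  shows "best_arm (m(i:=x)) K = j"
proof -
  from b[unfolded best_arm_iff[OF K]] have
    j: "j < K" and A: "\<forall>l<K. (m(i:=y)) l \<le> (m(i:=y)) j" and B: "\<forall>k<j. \<exists>l<K. (m(i:=y)) k < (m(i:=y)) l"
    by auto
  have A': "\<forall>l<K. (m(i:=x)) l \<le> (m(i:=x)) j"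
  proof (intro allI impI)
    fix l assume l: "l < K"
    have a: "(m(i:=y)) l \<le> m j" using A l ij by simp
    show "(m(i:=x)) l \<le> (m(i:=x)) j"
      using a ij xy by (cases "l = i") simp_all
  qed
  have B': "\<forall>k<j. \<exists>l<K. (m(i:=x)) k < (m(i:=x)) l"
  proof (intro allI impI)
    fix k assume k: "k < j"
    then obtain l where l: "l < K" "(m(i:=y)) k < (m(i:=y)) l" using B by auto
    show "\<exists>l<K. (m(i:=x)) k < (m(i:=x)) l"
    proof (cases "k = i")
      case True
      then have "l \<noteq> i" using l by auto
      then show ?thesis using l True xy by (intro exI[of _ l]) auto
    next
      case False
      show ?thesis
      proof (cases "l = i")
        case True
        have "m k < y" using l True False by auto
        moreover have "y \<le> m j" using A[rule_format, of i] j ij l(1) True by simp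
        ultimately show ?thesis using j ij False by (intro exI[of _ j]) auto
      next
        case False2: False
        then show ?thesis using l False by (intro exI[of _ l]) auto
      qed
    qed
  qed
  show ?thesis by (rule best_arm_iff[OF K, THEN iffD2]) (use j A' B' in blast)
qed

lemma best_arm_mono_self:
  assumes K: "K \<ge> 1" and xy: "x \<le> y"
    and b: "best_arm (m(i:=x)) K = i"
  shows "best_arm (m(i:=y)) K = i"
proof -
  from b[unfolded best_arm_iff[OF K]] have
    j: "i < K" and A: "\<forall>l<K. (m(i:=x)) l \<le> (m(i:=x)) i" and B: "\<forall>k<i. \<exists>l<K. (m(i:=x)) k < (m(i:=x)) l"
    by auto
  have A': "\<forall>l<K. (m(i:=y)) l \<le> (m(i:=y)) i"
  proof (intro allI impI)
    fix l assume l: "l < K"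
    have a: "(m(i:=x)) l \<le> x" using A l by simp
    show "(m(i:=y)) l \<le> (m(i:=y)) i"
      using a xy by (cases "l = i") simp_all
  qed
  have B': "\<forall>k<i. \<exists>l<K. (m(i:=y)) k < (m(i:=y)) l"
  proof (intro allI impI)
    fix k assume k: "k < i"
    then obtain l where l: "l < K" "(m(i:=x)) k < (m(i:=x)) l" using B by auto
    show "\<exists>l<K. (m(i:=y)) k < (m(i:=y)) l"
    proof (cases "l = i")
      case True
      then show ?thesis using l k xy j by (intro exI[of _ i]) auto
    next
      case False
      then show ?thesis using l k by (intro exI[of _ l]) auto
    qed
  qed
  show ?thesis by (rule best_arm_iff[OF K, THEN iffD2]) (use j A' B' in blast)
qed


locale bandit = prob_space M for M :: "'a measure" +
  fixes N :: "'r measure" and K i j :: nat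
    and mu :: "nat \<Rightarrow> 'a \<Rightarrow> real"
    and Z :: "nat \<Rightarrow> nat \<Rightarrow> 'a \<Rightarrow> bool"
    and R :: "'a \<Rightarrow> 'r"
    and alg :: "nat \<Rightarrow> (nat \<times> bool) list \<Rightarrow> 'r \<Rightarrow> nat"
  assumes K1: "K \<ge> 1" and iK: "i < K" and jK: "j < K"
    and mu_meas: "\<And>k. k < K \<Longrightarrow> mu k \<in> borel_measurable M"
    and mu01: "\<And>k \<omega>. k < K \<Longrightarrow> \<omega> \<in> space M \<Longrightarrow> mu k \<omega> \<in> {0..1}"
    and mu_indep: "indep_vars (\<lambda>_. borel) mu {..<K}"
    and Z_meas: "\<And>k n. k < K \<Longrightarrow> Z k n \<in> measurable M (count_space UNIV)"
    and Z_cond: "\<And>S (b :: nat \<times> nat \<Rightarrow> bool). finite S \<Longrightarrow> S \<subseteq> {..<K} \<times> UNIV \<Longrightarrow>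
           AE \<omega> in M.
             real_cond_exp M
               (vimage_algebra (space M) (\<lambda>\<omega>. restrict (\<lambda>k. mu k \<omega>) {..<K}) (PiM {..<K} (\<lambda>_. borel)))
               (indicator {\<omega>\<in>space M. \<forall>p\<in>S. Z (fst p) (snd p) \<omega> = b p}) \<omega>
             = (\<Prod>p\<in>S. if b p then mu (fst p) \<omega> else 1 - mu (fst p) \<omega>)"
    and R_meas: "R \<in> measurable M N"
    and alg_meas: "\<And>s h. alg s h \<in> measurable N (count_space UNIV)"
    and algK: "\<And>s h r. alg s h r < K"
    and R_indep: "indep_set (sets (vimage_algebra (space M) R N))
           (sets (vimage_algebra (space M)
              (\<lambda>\<omega>. (restrict (\<lambda>k. mu k \<omega>) {..<K}, restrict (\<lambda>p. Z (fst p) (snd p) \<omega>) ({..<K} \<times> UNIV)))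
              (PiM {..<K} (\<lambda>_. borel) \<Otimes>\<^sub>M PiM ({..<K} \<times> UNIV) (\<lambda>_. count_space UNIV))))"
begin

definition "hist t \<omega> = bandit_hist alg (\<lambda>a n. Z a n \<omega>) (R \<omega>) t"
definition "E h = {\<omega>\<in>space M. hist (length h) \<omega> = h}"
definition "mvec \<omega> = restrict (\<lambda>k. mu k \<omega>) {..<K}"
definition "Aset h = {r\<in>space N. \<forall>s<length h. alg (Suc s) (take s h) r = fst (h!s)}"
definition "Q h = prob {\<omega>\<in>space M. R \<omega> \<in> Aset h}"
definition "valid h \<longleftrightarrow> (\<forall>p\<in>set h. fst p < K)"
definition "Zev h = {\<omega>\<in>space M. \<forall>s<length h. Z (fst (h!s)) (cnt s h) \<omega> = snd (h!s)}"

lemma E_eq: "E h = {\<omega>\<in>space M. R \<omega> \<in> Aset h} \<inter> Zev h"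
  unfolding E_def Zev_def Aset_def hist_def hist_eq_iff hist_ok_def
  using measurable_space[OF R_meas] by (auto simp: eq_commute)

lemma hist_valid: "valid (hist t \<omega>)"
proof (induction t)
  case 0 then show ?case by (simp add: hist_def valid_def)
next
  case (Suc t) then show ?case by (simp add: hist_def valid_def Let_def algK)
qed

lemma E_invalid: "\<not> valid h \<Longrightarrow> E h = {}"
  unfolding E_def using hist_valid by (auto, metis hist_valid)

lemma Aset_sets: "Aset h \<in> sets N"
proof -
  have "Aset h = space N \<inter> (\<Inter>s\<in>{..<length h}. alg (Suc s) (take s h) -` {fst (h!s)} \<inter> space N)"
    using measurable_space[OF alg_meas] by (auto simp: Aset_def)
  also have "\<dots> \<in> sets N"
  proof (cases "length h = 0")
    case True then show ?thesis by simp
  next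
    case False
    then show ?thesis
    proof -
      have X: "(\<Inter>s\<in>{..<length h}. alg (Suc s) (take s h) -` {fst (h!s)} \<inter> space N) \<in> sets N"
        apply (rule sets.finite_INT)
        using False apply (simp_all add: lessThan_empty_iff)
        apply (rule measurable_sets[OF alg_meas])
        apply simp
        done
      show ?thesis by (subst sets.Int_space_eq1[OF X]) (rule X)
    qed
  qed
  finally show ?thesis .
qed

lemma R_set[measurable]: "{\<omega>\<in>space M. R \<omega> \<in> Aset h} \<in> events"
  using measurable_sets[OF R_meas Aset_sets] by (simp add: vimage_def Int_def conj_commute)

lemma Z_set: "k < K \<Longrightarrow> {\<omega>\<in>space M. Z k n \<omega> = b} \<in> events"
  using measurable_sets[OF Z_meas, of k "{b}" n] by (simp add: vimage_def Int_def conj_commute)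

lemma Zev_sets[measurable]: "valid h \<Longrightarrow> Zev h \<in> events"
proof -
  assume v: "valid h"
  have "Zev h = space M \<inter> (\<Inter>s\<in>{..<length h}. {\<omega>\<in>space M. Z (fst (h!s)) (cnt s h) \<omega> = snd (h!s)})"
    by (auto simp: Zev_def)
  also have "\<dots> \<in> events"
  proof (cases "length h = 0")
    case True then show ?thesis by simp
  next
    case False
    have "fst (h!s) < K" if "s < length h" for s using v that by (auto simp: valid_def)
    then show ?thesis using False
      by (intro sets.Int sets.top sets.finite_INT) (auto intro!: Z_set)
  qed
  finally show ?thesis .
qed

lemma E_sets[measurable]: "E h \<in> events"
proof (cases "valid h")
  case True then show ?thesis unfolding E_eq by (intro sets.Int R_set Zev_sets)
qed (simp add: E_invalid)


lemma hist_meas[measurable]: "hist t \<in> measurable M (count_space UNIV)"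
proof -
  have "hist t -` {h} \<inter> space M \<in> sets M" for h
  proof (cases "length h = t")
    case True
    then have "hist t -` {h} \<inter> space M = E h" by (auto simp: E_def)
    then show ?thesis by simp
  next
    case False
    then have "hist t -` {h} \<inter> space M = {}" by (auto simp: hist_def)
    then show ?thesis by simp
  qed
  then show ?thesis by (simp add: measurable_count_space_eq2_countable)
qed

lemma bounded_integrable:
  fixes f :: "'a \<Rightarrow> real"
  assumes "f \<in> borel_measurable M" "\<And>\<omega>. \<omega> \<in> space M \<Longrightarrow> \<bar>f \<omega>\<bar> \<le> B"
  shows "integrable M f"
  using assms by (intro integrable_const_bound[where B=B]) auto

lemma mu_meas'[measurable]: "k < K \<Longrightarrow> mu k \<in> borel_measurable M"
  by (rule mu_meas)

lemma mvec_meas[measurable]: "mvec \<in> measurable M (PiM {..<K} (\<lambda>_. borel))"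
  unfolding mvec_def by (rule measurable_restrict) (auto intro: mu_meas)

definition "zvec \<omega> = restrict (\<lambda>p. Z (fst p) (snd p) \<omega>) ({..<K} \<times> UNIV)"

lemma zvec_meas[measurable]: "zvec \<in> measurable M (PiM ({..<K} \<times> UNIV) (\<lambda>_. count_space UNIV))"
  unfolding zvec_def by (rule measurable_restrict) (auto intro: Z_meas)

definition ell :: "nat \<times> bool \<Rightarrow> (nat \<Rightarrow> real) \<Rightarrow> real" where "ell p m = (if snd p then m (fst p) else 1 - m (fst p))"
definition Lik :: "(nat \<times> bool) list \<Rightarrow> (nat \<Rightarrow> real) \<Rightarrow> real" where "Lik h m = (\<Prod>s<length h. ell (h!s) m)"

lemma sigma_vimage_sub:
  fixes g :: "'b \<Rightarrow> real"
  assumes X: "X \<in> measurable M N'" and g: "g \<in> borel_measurable N'"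
  shows "sigma_sets (space M) {(\<lambda>\<omega>. g (X \<omega>)) -` A \<inter> space M | A. A \<in> sets borel} \<subseteq> sets (vimage_algebra (space M) X N')"
proof -
  have "{(\<lambda>\<omega>. g (X \<omega>)) -` A \<inter> space M | A. A \<in> sets borel} \<subseteq> sets (vimage_algebra (space M) X N')"
  proof safe
    fix A :: "real set" assume A: "A \<in> sets borel"
    have "(\<lambda>\<omega>. g (X \<omega>)) -` A \<inter> space M = X -` (g -` A \<inter> space N') \<inter> space M"
      using measurable_space[OF X] by auto
    also have "\<dots> \<in> sets (vimage_algebra (space M) X N')"
      by (rule in_vimage_algebra) (rule measurable_sets[OF g A])
    finally show "(\<lambda>\<omega>. g (X \<omega>)) -` A \<inter> space M \<in> sets (vimage_algebra (space M) X N')" .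
  qed
  from sets.sigma_sets_subset[OF this] show ?thesis by simp
qed

lemma indep_set_mono: "indep_set A B \<Longrightarrow> A' \<subseteq> A \<Longrightarrow> B' \<subseteq> B \<Longrightarrow> indep_set A' B'"
  unfolding indep_set_def by (rule indep_sets_mono_sets) (auto split: bool.split)

lemma V_meas[measurable]: "(\<lambda>\<omega>. (mvec \<omega>, zvec \<omega>)) \<in> measurable M
   (PiM {..<K} (\<lambda>_. borel) \<Otimes>\<^sub>M PiM ({..<K} \<times> UNIV) (\<lambda>_. count_space UNIV))"
  by measurable

lemma R_indep_var:
  fixes g :: "'r \<Rightarrow> real" and \<psi> :: "(nat \<Rightarrow> real) \<times> (nat \<times> nat \<Rightarrow> bool) \<Rightarrow> real"
  assumes g: "g \<in> borel_measurable N"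
    and psi: "\<psi> \<in> borel_measurable (PiM {..<K} (\<lambda>_. borel) \<Otimes>\<^sub>M PiM ({..<K} \<times> UNIV) (\<lambda>_. count_space UNIV))"
  shows "indep_var borel (\<lambda>\<omega>. g (R \<omega>)) borel (\<lambda>\<omega>. \<psi> (mvec \<omega>, zvec \<omega>))"
  unfolding indep_var_eq
proof (intro conjI)
  show "random_variable borel (\<lambda>\<omega>. g (R \<omega>))" using g R_meas by measurable
  show "random_variable borel (\<lambda>\<omega>. \<psi> (mvec \<omega>, zvec \<omega>))"
    by (rule measurable_compose[OF V_meas psi])
  show "indep_set (sigma_sets (space M) {(\<lambda>\<omega>. g (R \<omega>)) -` A \<inter> space M |A. A \<in> sets borel})
     (sigma_sets (space M) {(\<lambda>\<omega>. \<psi> (mvec \<omega>, zvec \<omega>)) -` A \<inter> space M |A. A \<in> sets borel})"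
  proof (rule indep_set_mono[OF R_indep])
    show "sigma_sets (space M) {(\<lambda>\<omega>. g (R \<omega>)) -` A \<inter> space M |A. A \<in> sets borel} \<subseteq> sets (vimage_algebra (space M) R N)"
      by (rule sigma_vimage_sub[OF R_meas g])
    have "sigma_sets (space M) {(\<lambda>\<omega>. \<psi> (mvec \<omega>, zvec \<omega>)) -` A \<inter> space M |A. A \<in> sets borel}
      \<subseteq> sets (vimage_algebra (space M) (\<lambda>\<omega>. (mvec \<omega>, zvec \<omega>))
          (PiM {..<K} (\<lambda>_. borel) \<Otimes>\<^sub>M PiM ({..<K} \<times> UNIV) (\<lambda>_. count_space UNIV)))"
      by (rule sigma_vimage_sub[OF V_meas psi])
    then show "sigma_sets (space M) {(\<lambda>\<omega>. \<psi> (mvec \<omega>, zvec \<omega>)) -` A \<inter> space M |A. A \<in> sets borel}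
      \<subseteq> sets (vimage_algebra (space M)
              (\<lambda>\<omega>. (restrict (\<lambda>k. mu k \<omega>) {..<K}, restrict (\<lambda>p. Z (fst p) (snd p) \<omega>) ({..<K} \<times> UNIV)))
              (PiM {..<K} (\<lambda>_. borel) \<Otimes>\<^sub>M PiM ({..<K} \<times> UNIV) (\<lambda>_. count_space UNIV)))"
      by (simp add: mvec_def zvec_def)
  qed
qed

lemma S1:
  fixes f :: "(nat \<Rightarrow> real) \<Rightarrow> real"
  assumes v: "valid h" and f[measurable]: "f \<in> borel_measurable (PiM {..<K} (\<lambda>_. borel))"
    and fb: "\<And>\<omega>. \<omega> \<in> space M \<Longrightarrow> \<bar>f (mvec \<omega>)\<bar> \<le> 1"
  shows "(\<integral>\<omega>. f (mvec \<omega>) * indicator (E h) \<omega> \<partial>M) = Q h * (\<integral>\<omega>. f (mvec \<omega>) * indicator (Zev h) \<omega> \<partial>M)"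
proof -
  define p where "p s = (fst (h!s), cnt s h)" for s
  have pK: "p s \<in> {..<K} \<times> UNIV" if "s < length h" for s
    using v that by (auto simp: valid_def p_def nth_mem)
  define \<psi> where "\<psi> mz = f (fst mz) * (\<Prod>s<length h. indicator {z. z (p s) = snd (h!s)} (snd mz :: nat \<times> nat \<Rightarrow> bool))" for mz
  have [measurable]: "(\<lambda>z. indicator {z. z (p s) = snd (h!s)} z :: real) \<in> borel_measurable (PiM ({..<K} \<times> UNIV) (\<lambda>_. count_space UNIV))"
    if "s < length h" for s
  proof -
    have "(\<lambda>z. indicator {x. x = snd (h!s)} (z (p s)) :: real) \<in> borel_measurable (PiM ({..<K} \<times> UNIV) (\<lambda>_. count_space UNIV))"
      by (rule measurable_compose[OF measurable_component_singleton[OF pK[OF that]]]) simp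
    then show ?thesis by (simp add: indicator_def)
  qed
  have psi_meas: "\<psi> \<in> borel_measurable (PiM {..<K} (\<lambda>_. borel) \<Otimes>\<^sub>M PiM ({..<K} \<times> UNIV) (\<lambda>_. count_space UNIV))"
    unfolding \<psi>_def by measurable
  have psiV: "\<psi> (mvec \<omega>, zvec \<omega>) = f (mvec \<omega>) * indicator (Zev h) \<omega>" if "\<omega> \<in> space M" for \<omega>
  proof -
    have "(\<Prod>s<length h. indicator {z. z (p s) = snd (h!s)} (zvec \<omega>) :: real) = indicator (Zev h) \<omega>"
      using that pK by (auto simp: Zev_def zvec_def p_def indicator_def)
    then show ?thesis by (simp add: \<psi>_def)
  qed
  have iE: "indicator (E h) \<omega> = (indicator (Aset h) (R \<omega>) * indicator (Zev h) \<omega> :: real)" if "\<omega> \<in> space M" for \<omega>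
    using that by (auto simp: E_eq indicator_def)
  have ind: "indep_var borel ((\<lambda>r. indicator (Aset h) r :: real) \<circ> R) borel (\<psi> \<circ> (\<lambda>\<omega>. (mvec \<omega>, zvec \<omega>)))"
    using R_indep_var[OF _ psi_meas, of "indicator (Aset h)"] Aset_sets by (simp add: comp_def)
  have m1[measurable]: "(\<lambda>\<omega>. indicator (Aset h) (R \<omega>) :: real) \<in> borel_measurable M"
    using Aset_sets R_meas by measurable
  have m2[measurable]: "(\<lambda>\<omega>. f (mvec \<omega>) * indicator (Zev h) \<omega>) \<in> borel_measurable M"
    using v by measurable
  have i1: "integrable M (\<lambda>\<omega>. indicator (Aset h) (R \<omega>) :: real)"
    by (rule bounded_integrable[where B=1, OF m1]) (auto simp: indicator_def)
  have i2: "integrable M (\<lambda>\<omega>. f (mvec \<omega>) * indicator (Zev h) \<omega>)"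
    by (rule bounded_integrable[where B=1, OF m2]) (use fb in \<open>auto simp: indicator_def\<close>)
  have "(\<integral>\<omega>. f (mvec \<omega>) * indicator (E h) \<omega> \<partial>M) =
        (\<integral>\<omega>. ((\<lambda>r. indicator (Aset h) r :: real) \<circ> R) \<omega> * (\<psi> \<circ> (\<lambda>\<omega>. (mvec \<omega>, zvec \<omega>))) \<omega> \<partial>M)"
    by (rule Bochner_Integration.integral_cong[OF refl]) (simp add: iE psiV)
  also have "\<dots> = (\<integral>\<omega>. indicator (Aset h) (R \<omega>) \<partial>M) * (\<integral>\<omega>. f (mvec \<omega>) * indicator (Zev h) \<omega> \<partial>M)"
  proof (subst indep_var_lebesgue_integral[OF ind])
    show "integrable M ((\<lambda>r. indicator (Aset h) r :: real) \<circ> R)" using i1 by (simp add: comp_def)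
    have "integrable M (\<lambda>\<omega>. \<psi> (mvec \<omega>, zvec \<omega>))"
      using i2 by (rule integrable_cong_AE_imp) (auto simp: psiV intro!: measurable_compose[OF _ psi_meas])
    then show "integrable M (\<psi> \<circ> (\<lambda>\<omega>. (mvec \<omega>, zvec \<omega>)))" by (simp add: comp_def)
    show "(\<integral>\<omega>. ((\<lambda>r. indicator (Aset h) r :: real) \<circ> R) \<omega> \<partial>M) * (\<integral>\<omega>. (\<psi> \<circ> (\<lambda>\<omega>. (mvec \<omega>, zvec \<omega>))) \<omega> \<partial>M) =
      (\<integral>\<omega>. indicator (Aset h) (R \<omega>) \<partial>M) * (\<integral>\<omega>. f (mvec \<omega>) * indicator (Zev h) \<omega> \<partial>M)"
      by (simp add: comp_def psiV cong: Bochner_Integration.integral_cong)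
  qed
  also have "(\<integral>\<omega>. indicator (Aset h) (R \<omega>) \<partial>M) = Q h"
  proof -
    have "(\<integral>\<omega>. indicator (Aset h) (R \<omega>) \<partial>M) = (\<integral>\<omega>. indicator {\<omega>\<in>space M. R \<omega> \<in> Aset h} \<omega> \<partial>M :: real)"
      by (rule Bochner_Integration.integral_cong[OF refl]) (auto simp: indicator_def)
    then show ?thesis by (simp add: Q_def)
  qed
  finally show ?thesis .
qed


lemma filter_take_mono: "m \<le> n \<Longrightarrow> length (filter P (take m xs)) \<le> length (filter P (take n xs))"
proof -
  assume "m \<le> n"
  then have "take n xs = take m xs @ take (n - m) (drop m xs)"
    by (metis le_add_diff_inverse take_add)
  then show ?thesis by simp
qed

lemma cnt_less: "s < s' \<Longrightarrow> s' < length h \<Longrightarrow> fst (h!s) = fst (h!s') \<Longrightarrow> cnt s h < cnt s' h"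
proof -
  assume a: "s < s'" "s' < length h" "fst (h!s) = fst (h!s')"
  let ?P = "\<lambda>p. fst p = fst (h!s')"
  have "take (Suc s) h = take s h @ [h!s]" using a by (simp add: take_Suc_conv_app_nth)
  then have "length (filter ?P (take (Suc s) h)) = cnt s h + 1"
    using a by (simp add: cnt_def)
  moreover have "length (filter ?P (take (Suc s) h)) \<le> length (filter ?P (take s' h))"
    using a by (intro filter_take_mono) simp
  ultimately show ?thesis by (simp add: cnt_def)
qed

lemma pos_inj: "inj_on (\<lambda>s. (fst (h!s), cnt s h)) {..<length h}"
proof (rule inj_onI)
  fix s s' assume s: "s \<in> {..<length h}" "s' \<in> {..<length h}"
    and e: "(fst (h!s), cnt s h) = (fst (h!s'), cnt s' h)"
  show "s = s'"
  proof (rule ccontr)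
    assume "s \<noteq> s'"
    then have "s < s' \<or> s' < s" by arith
    then show False using cnt_less[of s s' h] cnt_less[of s' s h] s e by auto
  qed
qed

lemma Lik_meas[measurable]: assumes v: "valid h" shows "Lik h \<in> borel_measurable (PiM {..<K} (\<lambda>_. borel))"
  unfolding Lik_def ell_def
proof (rule borel_measurable_prod)
  fix s assume s: "s \<in> {..<length h}"
  then have "fst (h!s) \<in> {..<K}" using v by (auto simp: valid_def nth_mem)
  then have mc: "(\<lambda>m::nat\<Rightarrow>real. m (fst (h!s))) \<in> borel_measurable (PiM {..<K} (\<lambda>_. borel))"
    by (rule measurable_component_singleton)
  show "(\<lambda>m::nat\<Rightarrow>real. if snd (h ! s) then m (fst (h ! s)) else 1 - m (fst (h ! s))) \<in> borel_measurable (PiM {..<K} (\<lambda>_. borel))"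
  proof -
    have mc2: "(\<lambda>m::nat\<Rightarrow>real. 1 - m (fst (h!s))) \<in> borel_measurable (PiM {..<K} (\<lambda>_. borel))"
      by (rule borel_measurable_diff[OF borel_measurable_const mc])
    show ?thesis using mc mc2 by (cases "snd (h!s)") simp_all
  qed
qed

lemma Lik_mvec_meas[measurable]: "valid h \<Longrightarrow> (\<lambda>\<omega>. Lik h (mvec \<omega>)) \<in> borel_measurable M"
  by (rule measurable_compose[OF mvec_meas Lik_meas])

lemma S2:
  fixes f :: "(nat \<Rightarrow> real) \<Rightarrow> real"
  assumes v: "valid h" and f[measurable]: "f \<in> borel_measurable (PiM {..<K} (\<lambda>_. borel))"
    and fb: "\<And>\<omega>. \<omega> \<in> space M \<Longrightarrow> \<bar>f (mvec \<omega>)\<bar> \<le> 1"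
  shows "(\<integral>\<omega>. f (mvec \<omega>) * indicator (Zev h) \<omega> \<partial>M) = (\<integral>\<omega>. f (mvec \<omega>) * Lik h (mvec \<omega>) \<partial>M)"
proof -
  define p where "p s = (fst (h!s), cnt s h)" for s
  define S where "S = p ` {..<length h}"
  define b where "b q = snd (h ! (inv_into {..<length h} p q))" for q
  have inj: "inj_on p {..<length h}" unfolding p_def by (rule pos_inj)
  have pf: "fst (p s) = fst (h!s)" "snd (p s) = cnt s h" for s by (simp_all add: p_def)
  have bp: "b (p s) = snd (h!s)" if "s < length h" for s
    using inv_into_f_f[OF inj, of s] that by (simp add: b_def)
  have SK: "S \<subseteq> {..<K} \<times> UNIV" using v by (auto simp: S_def p_def valid_def nth_mem)
  have fin: "finite S" by (simp add: S_def)
  have mv: "(\<lambda>\<omega>. restrict (\<lambda>k. mu k \<omega>) {..<K}) = mvec" by (simp add: mvec_def fun_eq_iff)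
  have ZS: "{\<omega>\<in>space M. \<forall>q\<in>S. Z (fst q) (snd q) \<omega> = b q} = Zev h"
  proof -
    have "(\<forall>q\<in>S. Z (fst q) (snd q) \<omega> = b q) \<longleftrightarrow> (\<forall>s<length h. Z (fst (h!s)) (cnt s h) \<omega> = snd (h!s))" for \<omega>
    proof -
      have "(\<forall>q\<in>S. Z (fst q) (snd q) \<omega> = b q) \<longleftrightarrow> (\<forall>s\<in>{..<length h}. Z (fst (p s)) (snd (p s)) \<omega> = b (p s))"
        unfolding S_def by blast
      also have "\<dots> \<longleftrightarrow> (\<forall>s<length h. Z (fst (h!s)) (cnt s h) \<omega> = snd (h!s))"
        by (simp add: pf bp Ball_def)
      finally show ?thesis .
    qed
    then show ?thesis unfolding Zev_def by blast
  qed
  have prodS: "(\<Prod>q\<in>S. if b q then mu (fst q) \<omega> else 1 - mu (fst q) \<omega>) = Lik h (mvec \<omega>)" for \<omega>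
  proof -
    have "(\<Prod>q\<in>S. if b q then mu (fst q) \<omega> else 1 - mu (fst q) \<omega>)
        = (\<Prod>s<length h. if b (p s) then mu (fst (p s)) \<omega> else 1 - mu (fst (p s)) \<omega>)"
      unfolding S_def by (rule prod.reindex[OF inj, unfolded comp_def])
    also have "\<dots> = Lik h (mvec \<omega>)"
      unfolding Lik_def using v
      by (intro prod.cong refl) (simp add: bp ell_def pf mvec_def valid_def nth_mem)
    finally show ?thesis .
  qed
  have ce: "AE \<omega> in M. real_cond_exp M (vimage_algebra (space M) mvec (PiM {..<K} (\<lambda>_. borel)))
              (indicator (Zev h)) \<omega> = Lik h (mvec \<omega>)"
    using Z_cond[OF fin SK, of b] unfolding mv ZS prodS .
  have sub: "subalgebra M (vimage_algebra (space M) mvec (PiM {..<K} (\<lambda>_. borel)))"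
    unfolding subalgebra_def using sets_image_in_sets[OF refl mvec_meas] by auto
  interpret Fm: finite_measure_subalgebra M "vimage_algebra (space M) mvec (PiM {..<K} (\<lambda>_. borel))"
    by unfold_locales (rule sub)
  have fF: "(\<lambda>\<omega>. f (mvec \<omega>)) \<in> borel_measurable (vimage_algebra (space M) mvec (PiM {..<K} (\<lambda>_. borel)))"
    by (rule measurable_compose[OF measurable_vimage_algebra1 f]) (use measurable_space[OF mvec_meas] in auto)
  have m2[measurable]: "(\<lambda>\<omega>. f (mvec \<omega>) * indicator (Zev h) \<omega>) \<in> borel_measurable M"
    using v by measurable
  have i2: "integrable M (\<lambda>\<omega>. f (mvec \<omega>) * indicator (Zev h) \<omega>)"
    by (rule bounded_integrable[where B=1, OF m2]) (use fb in \<open>auto simp: indicator_def\<close>)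
  have "(\<integral>\<omega>. f (mvec \<omega>) * indicator (Zev h) \<omega> \<partial>M) =
      (\<integral>\<omega>. f (mvec \<omega>) * real_cond_exp M (vimage_algebra (space M) mvec (PiM {..<K} (\<lambda>_. borel))) (indicator (Zev h)) \<omega> \<partial>M)"
    using Fm.real_cond_exp_intg(2)[OF i2 fF] v by simp
  also have "\<dots> = (\<integral>\<omega>. f (mvec \<omega>) * Lik h (mvec \<omega>) \<partial>M)"
  proof (rule integral_cong_AE)
    show "AE \<omega> in M. f (mvec \<omega>) * real_cond_exp M (vimage_algebra (space M) mvec (PiM {..<K} (\<lambda>_. borel))) (indicator (Zev h)) \<omega>
       = f (mvec \<omega>) * Lik h (mvec \<omega>)"
      using ce by eventually_elim simp
  qed (use v in simp_all)
  finally show ?thesis .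
qed

lemma star:
  fixes f :: "(nat \<Rightarrow> real) \<Rightarrow> real"
  assumes v: "valid h" and f: "f \<in> borel_measurable (PiM {..<K} (\<lambda>_. borel))"
    and fb: "\<And>\<omega>. \<omega> \<in> space M \<Longrightarrow> \<bar>f (mvec \<omega>)\<bar> \<le> 1"
  shows "(\<integral>\<omega>. f (mvec \<omega>) * indicator (E h) \<omega> \<partial>M) = Q h * (\<integral>\<omega>. f (mvec \<omega>) * Lik h (mvec \<omega>) \<partial>M)"
  using S1[OF assms] S2[OF assms] by simp

end

context bandit begin

definition "rvec \<omega> = restrict (\<lambda>k. mu k \<omega>) ({..<K} - {i})"
definition lam :: "(nat \<times> bool) list \<Rightarrow> real \<Rightarrow> real" where
  "lam h x = (\<Prod>s\<in>{..<length h} \<inter> {s. fst (h!s) = i}. if snd (h!s) then x else 1 - x)"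
definition Lam :: "(nat \<times> bool) list \<Rightarrow> (nat \<Rightarrow> real) \<Rightarrow> real" where
  "Lam h r = (\<Prod>s\<in>{..<length h} - {s. fst (h!s) = i}. ell (h!s) r)"

lemma rvec_meas[measurable]: "rvec \<in> measurable M (PiM ({..<K} - {i}) (\<lambda>_. borel))"
  unfolding rvec_def by (rule measurable_restrict) (auto intro: mu_meas)

lemma IND:
  fixes f1 :: "real \<Rightarrow> real" and f2 :: "(nat \<Rightarrow> real) \<Rightarrow> real"
  assumes f1[measurable]: "f1 \<in> borel_measurable borel"
    and f2[measurable]: "f2 \<in> borel_measurable (PiM ({..<K} - {i}) (\<lambda>_. borel))"
    and b1: "\<And>\<omega>. \<omega> \<in> space M \<Longrightarrow> \<bar>f1 (mu i \<omega>)\<bar> \<le> Ba"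
    and b2: "\<And>\<omega>. \<omega> \<in> space M \<Longrightarrow> \<bar>f2 (rvec \<omega>)\<bar> \<le> Bb"
  shows "(\<integral>\<omega>. f1 (mu i \<omega>) * f2 (rvec \<omega>) \<partial>M) = (\<integral>\<omega>. f1 (mu i \<omega>) \<partial>M) * (\<integral>\<omega>. f2 (rvec \<omega>) \<partial>M)"
proof -
  have iv: "indep_var (PiM {i} (\<lambda>_. borel)) (\<lambda>\<omega>. restrict (\<lambda>k. mu k \<omega>) {i})
                      (PiM ({..<K} - {i}) (\<lambda>_. borel)) (\<lambda>\<omega>. restrict (\<lambda>k. mu k \<omega>) ({..<K} - {i}))"
    by (rule indep_var_restrict[OF mu_indep]) (use iK in auto)
  have g1: "(\<lambda>m. f1 (m i)) \<in> borel_measurable (PiM {i} (\<lambda>_. borel))"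
    by (rule measurable_compose[OF measurable_component_singleton[of i "{i}" "\<lambda>_. borel"] f1]) simp
  have iv2: "indep_var borel ((\<lambda>m. f1 (m i)) \<circ> (\<lambda>\<omega>. restrict (\<lambda>k. mu k \<omega>) {i})) borel (f2 \<circ> rvec)"
    unfolding rvec_def by (rule indep_var_compose[OF iv g1 f2])
  have e1: "((\<lambda>m. f1 (m i)) \<circ> (\<lambda>\<omega>. restrict (\<lambda>k. mu k \<omega>) {i})) = (\<lambda>\<omega>. f1 (mu i \<omega>))"
    by (simp add: fun_eq_iff)
  have iv3: "indep_var borel (\<lambda>\<omega>. f1 (mu i \<omega>)) borel (\<lambda>\<omega>. f2 (rvec \<omega>))"
    using iv2 unfolding e1 by (simp add: comp_def)
  have m1: "(\<lambda>\<omega>. f1 (mu i \<omega>)) \<in> borel_measurable M" using iK by measurable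
  have m2: "(\<lambda>\<omega>. f2 (rvec \<omega>)) \<in> borel_measurable M" by measurable
  show ?thesis
    by (rule indep_var_lebesgue_integral[OF iv3 bounded_integrable[OF m1 b1] bounded_integrable[OF m2 b2]])
qed

lemma lam_meas[measurable]: "lam h \<in> borel_measurable borel"
  unfolding lam_def
proof (rule borel_measurable_prod)
  fix s
  have "(\<lambda>x::real. 1 - x) \<in> borel_measurable borel" by measurable
  then show "(\<lambda>x::real. if snd (h ! s) then x else 1 - x) \<in> borel_measurable borel"
    by (cases "snd (h!s)") simp_all
qed

lemma Lam_meas[measurable]: assumes v: "valid h" shows "Lam h \<in> borel_measurable (PiM ({..<K} - {i}) (\<lambda>_. borel))"
  unfolding Lam_def ell_def
proof (rule borel_measurable_prod)
  fix s assume s: "s \<in> {..<length h} - {s. fst (h!s) = i}"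
  then have "fst (h!s) \<in> {..<K} - {i}" using v by (auto simp: valid_def nth_mem)
  then have mc: "(\<lambda>m::nat\<Rightarrow>real. m (fst (h!s))) \<in> borel_measurable (PiM ({..<K} - {i}) (\<lambda>_. borel))"
    by (rule measurable_component_singleton)
  have mc2: "(\<lambda>m::nat\<Rightarrow>real. 1 - m (fst (h!s))) \<in> borel_measurable (PiM ({..<K} - {i}) (\<lambda>_. borel))"
    by (rule borel_measurable_diff[OF borel_measurable_const mc])
  show "(\<lambda>m::nat\<Rightarrow>real. if snd (h ! s) then m (fst (h ! s)) else 1 - m (fst (h ! s))) \<in> borel_measurable (PiM ({..<K} - {i}) (\<lambda>_. borel))"
    using mc mc2 by (cases "snd (h!s)") simp_all
qed

lemma Lik_split:
  assumes v: "valid h" and \<omega>: "\<omega> \<in> space M"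
  shows "Lik h (mvec \<omega>) = lam h (mu i \<omega>) * Lam h (rvec \<omega>)"
proof -
  have "Lik h (mvec \<omega>) = (\<Prod>s\<in>{..<length h} \<inter> {s. fst (h!s) = i}. ell (h!s) (mvec \<omega>)) *
                          (\<Prod>s\<in>{..<length h} - {s. fst (h!s) = i}. ell (h!s) (mvec \<omega>))"
    unfolding Lik_def by (rule prod.Int_Diff) simp
  also have "(\<Prod>s\<in>{..<length h} \<inter> {s. fst (h!s) = i}. ell (h!s) (mvec \<omega>)) = lam h (mu i \<omega>)"
    unfolding lam_def by (rule prod.cong[OF refl]) (use iK in \<open>auto simp: ell_def mvec_def\<close>)
  also have "(\<Prod>s\<in>{..<length h} - {s. fst (h!s) = i}. ell (h!s) (mvec \<omega>)) = Lam h (rvec \<omega>)"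
    unfolding Lam_def by (rule prod.cong[OF refl]) (use v in \<open>auto simp: ell_def mvec_def rvec_def valid_def nth_mem\<close>)
  finally show ?thesis .
qed

lemma ell01: "\<omega> \<in> space M \<Longrightarrow> fst p < K \<Longrightarrow> 0 \<le> ell p (mvec \<omega>) \<and> ell p (mvec \<omega>) \<le> 1"
  using mu01[of "fst p" \<omega>] by (auto simp: ell_def mvec_def)

lemma Lik01: "valid h \<Longrightarrow> \<omega> \<in> space M \<Longrightarrow> 0 \<le> Lik h (mvec \<omega>) \<and> Lik h (mvec \<omega>) \<le> 1"
proof -
  assume v: "valid h" and w: "\<omega> \<in> space M"
  have "0 \<le> ell (h!s) (mvec \<omega>) \<and> ell (h!s) (mvec \<omega>) \<le> 1" if "s < length h" for s
    using ell01[OF w, of "h!s"] v that by (auto simp: valid_def nth_mem)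
  then show ?thesis unfolding Lik_def by (auto intro!: prod_nonneg prod_le_1)
qed

lemma lam01: "x \<in> {0..1} \<Longrightarrow> 0 \<le> lam h x \<and> lam h x \<le> 1"
  unfolding lam_def by (auto intro!: prod_nonneg prod_le_1)

lemma Lam01: "valid h \<Longrightarrow> \<omega> \<in> space M \<Longrightarrow> 0 \<le> Lam h (rvec \<omega>) \<and> Lam h (rvec \<omega>) \<le> 1"
proof -
  assume v: "valid h" and w: "\<omega> \<in> space M"
  have "ell (h!s) (rvec \<omega>) = ell (h!s) (mvec \<omega>)" if "s \<in> {..<length h} - {s. fst (h!s) = i}" for s
    using that v by (auto simp: ell_def mvec_def rvec_def valid_def nth_mem)
  moreover have "0 \<le> ell (h!s) (mvec \<omega>) \<and> ell (h!s) (mvec \<omega>) \<le> 1" if "s < length h" for s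
    using ell01[OF w] v that by (auto simp: valid_def nth_mem)
  ultimately show ?thesis unfolding Lam_def
    by (auto intro!: prod_nonneg prod_le_1)
qed

end

context bandit begin

definition Gf :: "(nat \<Rightarrow> real) \<Rightarrow> real" where
  "Gf m = indicator {m. best_arm m K = j} m"

lemma best_arm_pred:
  assumes g: "\<And>k. k < K \<Longrightarrow> (\<lambda>m. g m k) \<in> borel_measurable MM"
  shows "{m\<in>space MM. best_arm (g m) K = j} \<in> sets MM"
proof -
  have eq: "{m\<in>space MM. best_arm (g m) K = j} =
     {m\<in>space MM. j < K \<and> (\<forall>l\<in>{..<K}. g m l \<le> g m j) \<and> (\<forall>k\<in>{..<j}. \<exists>l\<in>{..<K}. g m k < g m l)}"
    by (auto simp: best_arm_iff[OF K1])
  have [measurable]: "(\<lambda>m. g m k) \<in> borel_measurable MM" if "k \<in> {..<K}" for k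
    using g that by simp
  have gj[measurable]: "(\<lambda>m. g m j) \<in> borel_measurable MM" using g jK by simp
  show ?thesis unfolding eq
    using jK by measurable
qed

lemma Gf_comp_meas:
  assumes g: "\<And>k. k < K \<Longrightarrow> (\<lambda>m. g m k) \<in> borel_measurable MM"
  shows "(\<lambda>m. Gf (g m)) \<in> borel_measurable MM"
proof -
  have "(\<lambda>m. Gf (g m)) = (\<lambda>m. indicator {m\<in>space MM. best_arm (g m) K = j} m)" if False
    using that by simp
  have "(\<lambda>m. indicator {m\<in>space MM. best_arm (g m) K = j} m :: real) \<in> borel_measurable MM"
    by (rule borel_measurable_indicator[OF best_arm_pred[OF g]])
  moreover have "\<And>m. m \<in> space MM \<Longrightarrow> indicator {m\<in>space MM. best_arm (g m) K = j} m = Gf (g m)"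
    by (simp add: Gf_def indicator_def)
  ultimately show ?thesis by (rule measurable_cong[THEN iffD1, rotated])
qed

lemma Gf_meas[measurable]: "Gf \<in> borel_measurable (PiM {..<K} (\<lambda>_. borel))"
  using Gf_comp_meas[of "\<lambda>m. m" "PiM {..<K} (\<lambda>_. borel)"] by simp

lemma Gf01: "0 \<le> Gf m \<and> Gf m \<le> 1"
  by (simp add: Gf_def indicator_def)


lemma int_bounded:
  fixes f :: "'a \<Rightarrow> real"
  assumes "f \<in> borel_measurable M" "\<And>\<omega>. \<omega> \<in> space M \<Longrightarrow> \<bar>f \<omega>\<bar> \<le> 1"
  shows "integrable M f"
  by (rule bounded_integrable[OF assms])

lemma varpos:
  assumes v: "valid h"
  shows "(\<integral>\<omega>. mu i \<omega> * mu i \<omega> * Lik h (mvec \<omega>) \<partial>M) * (\<integral>\<omega>. Lik h (mvec \<omega>) \<partial>M)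
         - (\<integral>\<omega>. mu i \<omega> * Lik h (mvec \<omega>) \<partial>M)^2 \<ge> 0"
proof -
  define L where "L \<omega> = Lik h (mvec \<omega>)" for \<omega>
  define x where "x \<omega> = mu i \<omega>" for \<omega>
  have Lm[measurable]: "L \<in> borel_measurable M" unfolding L_def using v by measurable
  have xm[measurable]: "x \<in> borel_measurable M" unfolding x_def using iK by measurable
  have L01: "0 \<le> L \<omega> \<and> L \<omega> \<le> 1" if "\<omega> \<in> space M" for \<omega> using Lik01[OF v that] by (simp add: L_def)
  have x01: "0 \<le> x \<omega> \<and> x \<omega> \<le> 1" if "\<omega> \<in> space M" for \<omega> using mu01[OF iK that] by (simp add: x_def)
  have iL: "integrable M L" by (rule int_bounded) (auto dest: L01)
  have ixL: "integrable M (\<lambda>\<omega>. x \<omega> * L \<omega>)"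
    by (rule int_bounded) (auto simp: abs_mult intro!: mult_le_one dest: L01 x01)
  have ixxL: "integrable M (\<lambda>\<omega>. x \<omega> * x \<omega> * L \<omega>)"
    by (rule int_bounded) (auto simp: abs_mult intro!: mult_le_one dest: L01 x01)
  define W where "W = (\<integral>\<omega>. L \<omega> \<partial>M)"
  define X1 where "X1 = (\<integral>\<omega>. x \<omega> * L \<omega> \<partial>M)"
  define X2 where "X2 = (\<integral>\<omega>. x \<omega> * x \<omega> * L \<omega> \<partial>M)"
  have W0: "W \<ge> 0" unfolding W_def by (rule integral_nonneg_AE, rule AE_I2) (use L01 in auto)
  have X1W: "0 \<le> X1 \<and> X1 \<le> W"
  proof
    show "0 \<le> X1" unfolding X1_def by (rule integral_nonneg_AE, rule AE_I2) (use L01 x01 in auto)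
    show "X1 \<le> W" unfolding X1_def W_def
      by (rule integral_mono[OF ixL iL]) (use L01 x01 in \<open>auto intro: mult_left_le_one_le\<close>)
  qed
  have X2p: "X2 \<ge> 0" unfolding X2_def by (rule integral_nonneg_AE, rule AE_I2) (use L01 x01 in auto)
  have "(\<integral>\<omega>. (W * x \<omega> - X1)^2 * L \<omega> \<partial>M) =
        (\<integral>\<omega>. W^2 * (x \<omega> * x \<omega> * L \<omega>) - (2 * W * X1) * (x \<omega> * L \<omega>) + X1^2 * L \<omega> \<partial>M)"
    by (rule Bochner_Integration.integral_cong[OF refl]) (simp add: power2_eq_square algebra_simps)
  also have "\<dots> = W^2 * X2 - (2 * W * X1) * X1 + X1^2 * W"
    using ixxL ixL iL by (simp add: X2_def X1_def W_def)
  finally have e: "(\<integral>\<omega>. (W * x \<omega> - X1)^2 * L \<omega> \<partial>M) = W * (X2 * W - X1^2)"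
    by (simp add: power2_eq_square algebra_simps)
  have "(\<integral>\<omega>. (W * x \<omega> - X1)^2 * L \<omega> \<partial>M) \<ge> 0"
    by (rule integral_nonneg_AE, rule AE_I2) (use L01 in auto)
  then have "W * (X2 * W - X1^2) \<ge> 0" using e by simp
  then have "X2 * W - X1^2 \<ge> 0"
  proof (cases "W = 0")
    case True then have "X1 = 0" using X1W by simp
    then show ?thesis using True by simp
  next
    case False then have "W > 0" using W0 by simp
    with \<open>W * (X2 * W - X1^2) \<ge> 0\<close> show ?thesis by (simp add: zero_le_mult_iff)
  qed
  then show ?thesis by (simp add: X2_def W_def X1_def x_def L_def)
qed


lemma Gamma_meas: "(\<lambda>r. Gf (r(i:=c))) \<in> borel_measurable (PiM ({..<K} - {i}) (\<lambda>_. borel))"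
proof (rule Gf_comp_meas)
  fix k assume k: "k < K"
  show "(\<lambda>r. (r(i:=c)) k) \<in> borel_measurable (PiM ({..<K} - {i}) (\<lambda>_. borel))"
  proof (cases "k = i")
    case True then show ?thesis by simp
  next
    case False
    then have "k \<in> {..<K} - {i}" using k by simp
    then have "(\<lambda>r::nat\<Rightarrow>real. r k) \<in> borel_measurable (PiM ({..<K} - {i}) (\<lambda>_. borel))"
      by (rule measurable_component_singleton)
    then show ?thesis using False by simp
  qed
qed

lemma Gf_mvec: "\<omega> \<in> space M \<Longrightarrow> Gf (mvec \<omega>) = Gf ((mvec \<omega>)(i := mu i \<omega>))"
proof -
  have "mvec \<omega> i = mu i \<omega>" using iK by (simp add: mvec_def)
  then show ?thesis by (simp add: fun_upd_idem)
qed

lemma Gf_cong: "(\<And>k. k < K \<Longrightarrow> m k = m' k) \<Longrightarrow> Gf m = Gf m'"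
  unfolding Gf_def indicator_def using best_arm_cong[of K m m'] by simp

lemma Gamma_rvec: "Gf ((mvec \<omega>)(i:=c)) = Gf ((rvec \<omega>)(i:=c))"
  by (rule Gf_cong) (auto simp: mvec_def rvec_def)

lemma cov_generic:
  fixes \<sigma> :: real
  assumes v: "valid h"
    and sgn: "\<And>m y c. \<sigma> * ((y - c) * (Gf (m(i:=y)) - Gf (m(i:=c)))) \<le> 0"
  shows "\<sigma> * ((\<integral>\<omega>. Gf (mvec \<omega>) * mu i \<omega> * Lik h (mvec \<omega>) \<partial>M) * (\<integral>\<omega>. Lik h (mvec \<omega>) \<partial>M)
         - (\<integral>\<omega>. Gf (mvec \<omega>) * Lik h (mvec \<omega>) \<partial>M) * (\<integral>\<omega>. mu i \<omega> * Lik h (mvec \<omega>) \<partial>M)) \<le> 0"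
proof -
  define L where "L \<omega> = Lik h (mvec \<omega>)" for \<omega>
  define x where "x \<omega> = mu i \<omega>" for \<omega>
  define G where "G \<omega> = Gf (mvec \<omega>)" for \<omega>
  have Lm[measurable]: "L \<in> borel_measurable M" unfolding L_def using v by measurable
  have xm[measurable]: "x \<in> borel_measurable M" unfolding x_def using iK by measurable
  have Gm[measurable]: "G \<in> borel_measurable M" unfolding G_def by measurable
  have L01: "0 \<le> L \<omega> \<and> L \<omega> \<le> 1" if "\<omega> \<in> space M" for \<omega> using Lik01[OF v that] by (simp add: L_def)
  have x01: "0 \<le> x \<omega> \<and> x \<omega> \<le> 1" if "\<omega> \<in> space M" for \<omega> using mu01[OF iK that] by (simp add: x_def)
  have G01: "0 \<le> G \<omega> \<and> G \<omega> \<le> 1" if "\<omega> \<in> space M" for \<omega> using Gf01 by (simp add: G_def)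
  have iL: "integrable M L" by (rule int_bounded) (auto dest: L01)
  have ixL: "integrable M (\<lambda>\<omega>. x \<omega> * L \<omega>)"
    by (rule int_bounded) (auto simp: abs_mult intro!: mult_le_one dest: L01 x01)
  have iGL: "integrable M (\<lambda>\<omega>. G \<omega> * L \<omega>)"
    by (rule int_bounded) (auto simp: abs_mult intro!: mult_le_one dest: L01 G01)
  have iGxL: "integrable M (\<lambda>\<omega>. G \<omega> * x \<omega> * L \<omega>)"
    by (rule int_bounded) (auto simp: abs_mult intro!: mult_le_one dest: L01 x01 G01)
  define W where "W = (\<integral>\<omega>. L \<omega> \<partial>M)"
  define X1 where "X1 = (\<integral>\<omega>. x \<omega> * L \<omega> \<partial>M)"
  define Gx where "Gx = (\<integral>\<omega>. G \<omega> * x \<omega> * L \<omega> \<partial>M)"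
  define G0 where "G0 = (\<integral>\<omega>. G \<omega> * L \<omega> \<partial>M)"
  have W0: "W \<ge> 0" unfolding W_def by (rule integral_nonneg_AE, rule AE_I2) (use L01 in auto)
  have X1W: "0 \<le> X1 \<and> X1 \<le> W"
  proof
    show "0 \<le> X1" unfolding X1_def by (rule integral_nonneg_AE, rule AE_I2) (use L01 x01 in auto)
    show "X1 \<le> W" unfolding X1_def W_def
      by (rule integral_mono[OF ixL iL]) (use L01 x01 in \<open>auto intro: mult_left_le_one_le\<close>)
  qed
  have goal: "\<sigma> * (Gx * W - G0 * X1) \<le> 0"
  proof (cases "W = 0")
    case True then have "X1 = 0" using X1W by simp
    then show ?thesis using True by simp
  next
    case False
    then have Wp: "W > 0" using W0 by simp
    define c where "c = X1 / W"
    define Gc where "Gc \<omega> = Gf ((mvec \<omega>)(i:=c))" for \<omega>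
    have Gcm[measurable]: "Gc \<in> borel_measurable M"
    proof -
      have "(\<lambda>\<omega>. Gf ((rvec \<omega>)(i:=c))) \<in> borel_measurable M"
        by (rule measurable_compose[OF rvec_meas Gamma_meas])
      then show ?thesis unfolding Gc_def by (simp add: Gamma_rvec)
    qed
    have Gc01: "0 \<le> Gc \<omega> \<and> Gc \<omega> \<le> 1" if "\<omega> \<in> space M" for \<omega> using Gf01 by (simp add: Gc_def)
    have k1: "(\<integral>\<omega>. (W * x \<omega> - X1) * G \<omega> * L \<omega> \<partial>M) = W * Gx - X1 * G0"
    proof -
      have "(\<integral>\<omega>. (W * x \<omega> - X1) * G \<omega> * L \<omega> \<partial>M) = (\<integral>\<omega>. W * (G \<omega> * x \<omega> * L \<omega>) - X1 * (G \<omega> * L \<omega>) \<partial>M)"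
        by (rule Bochner_Integration.integral_cong[OF refl]) (simp add: algebra_simps)
      also have "\<dots> = W * Gx - X1 * G0" using iGxL iGL by (simp add: Gx_def G0_def)
      finally show ?thesis .
    qed
    have iA: "integrable M (\<lambda>\<omega>. \<sigma> * ((W * x \<omega> - X1) * G \<omega> * L \<omega>))"
      using iGxL iGL by (subst Bochner_Integration.integrable_cong[OF refl, where g="\<lambda>\<omega>. (\<sigma> * W) * (G \<omega> * x \<omega> * L \<omega>) - (\<sigma> * X1) * (G \<omega> * L \<omega>)"])
        (auto simp: algebra_simps)
    have iGcL: "integrable M (\<lambda>\<omega>. Gc \<omega> * L \<omega>)"
      by (rule int_bounded) (auto simp: abs_mult intro!: mult_le_one dest: L01 Gc01)
    have iGcxL: "integrable M (\<lambda>\<omega>. Gc \<omega> * x \<omega> * L \<omega>)"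
      by (rule int_bounded) (auto simp: abs_mult intro!: mult_le_one dest: L01 x01 Gc01)
    have iB: "integrable M (\<lambda>\<omega>. \<sigma> * ((W * x \<omega> - X1) * Gc \<omega> * L \<omega>))"
      using iGcxL iGcL by (subst Bochner_Integration.integrable_cong[OF refl, where g="\<lambda>\<omega>. (\<sigma> * W) * (Gc \<omega> * x \<omega> * L \<omega>) - (\<sigma> * X1) * (Gc \<omega> * L \<omega>)"])
        (auto simp: algebra_simps)
    have pt: "\<sigma> * ((W * x \<omega> - X1) * G \<omega> * L \<omega>) \<le> \<sigma> * ((W * x \<omega> - X1) * Gc \<omega> * L \<omega>)" if w: "\<omega> \<in> space M" for \<omega>
    proof -
      have "\<sigma> * ((x \<omega> - c) * (Gf ((mvec \<omega>)(i:=x \<omega>)) - Gf ((mvec \<omega>)(i:=c)))) \<le> 0" by (rule sgn)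
      then have s1: "\<sigma> * ((x \<omega> - c) * (G \<omega> - Gc \<omega>)) \<le> 0"
        using Gf_mvec[OF w] by (simp add: G_def Gc_def x_def)
      have eqc: "W * x \<omega> - X1 = W * (x \<omega> - c)" using Wp by (simp add: c_def field_simps)
      have "\<sigma> * ((W * x \<omega> - X1) * G \<omega> * L \<omega>) - \<sigma> * ((W * x \<omega> - X1) * Gc \<omega> * L \<omega>)
          = (W * L \<omega>) * (\<sigma> * ((x \<omega> - c) * (G \<omega> - Gc \<omega>)))" unfolding eqc by (simp add: algebra_simps)
      also have "\<dots> \<le> 0" by (rule mult_nonneg_nonpos) (use s1 Wp L01[OF w] in auto)
      finally show ?thesis by simp
    qed
    have k2: "\<sigma> * (\<integral>\<omega>. (W * x \<omega> - X1) * G \<omega> * L \<omega> \<partial>M) \<le> \<sigma> * (\<integral>\<omega>. (W * x \<omega> - X1) * Gc \<omega> * L \<omega> \<partial>M)"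
      using integral_mono[OF iA iB pt] by simp
    have k3: "(\<integral>\<omega>. (W * x \<omega> - X1) * Gc \<omega> * L \<omega> \<partial>M) = 0"
    proof -
      define f1 where "f1 y = (W * y - X1) * lam h y" for y
      have f1m[measurable]: "f1 \<in> borel_measurable borel" unfolding f1_def by measurable
      have f1b: "\<bar>f1 (mu i \<omega>)\<bar> \<le> W + X1" if w: "\<omega> \<in> space M" for \<omega>
      proof -
        have m: "0 \<le> W * mu i \<omega> \<and> W * mu i \<omega> \<le> W" using mu01[OF iK w] W0
          by (auto intro: mult_right_le_one_le)
        have a: "\<bar>W * mu i \<omega> - X1\<bar> \<le> W + X1" using m X1W by (auto simp: abs_le_iff)
        have b: "\<bar>lam h (mu i \<omega>)\<bar> \<le> 1" using lam01[OF mu01[OF iK w]] by simp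
        have "\<bar>f1 (mu i \<omega>)\<bar> = \<bar>W * mu i \<omega> - X1\<bar> * \<bar>lam h (mu i \<omega>)\<bar>" by (simp add: f1_def abs_mult)
        also have "\<dots> \<le> (W + X1) * 1" using a b by (intro mult_mono) auto
        finally show ?thesis by simp
      qed
      have Lamm[measurable]: "Lam h \<in> borel_measurable (PiM ({..<K} - {i}) (\<lambda>_. borel))" using v by measurable
      have Gam[measurable]: "(\<lambda>r. Gf (r(i:=c))) \<in> borel_measurable (PiM ({..<K} - {i}) (\<lambda>_. borel))"
        by (rule Gamma_meas)
      have I1: "(\<integral>\<omega>. f1 (mu i \<omega>) * Lam h (rvec \<omega>) \<partial>M) = (\<integral>\<omega>. f1 (mu i \<omega>) \<partial>M) * (\<integral>\<omega>. Lam h (rvec \<omega>) \<partial>M)"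
        by (rule IND[where Bb=1, OF f1m Lamm f1b]) (use Lam01[OF v] in auto)
      have I2: "(\<integral>\<omega>. f1 (mu i \<omega>) * (Gf ((rvec \<omega>)(i:=c)) * Lam h (rvec \<omega>)) \<partial>M)
           = (\<integral>\<omega>. f1 (mu i \<omega>) \<partial>M) * (\<integral>\<omega>. Gf ((rvec \<omega>)(i:=c)) * Lam h (rvec \<omega>) \<partial>M)"
      proof (rule IND[where Bb=1, OF f1m _ f1b])
        show "(\<lambda>r. Gf (r(i:=c)) * Lam h r) \<in> borel_measurable (PiM ({..<K} - {i}) (\<lambda>_. borel))" by measurable
        fix \<omega> assume w: "\<omega> \<in> space M"
        show "\<bar>Gf ((rvec \<omega>)(i:=c)) * Lam h (rvec \<omega>)\<bar> \<le> 1"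
          using Gf01[of "(rvec \<omega>)(i:=c)"] Lam01[OF v w] by (auto simp: abs_mult intro: mult_le_one)
      qed
      have e1: "(\<integral>\<omega>. f1 (mu i \<omega>) * Lam h (rvec \<omega>) \<partial>M) = (\<integral>\<omega>. (W * x \<omega> - X1) * L \<omega> \<partial>M)"
        by (rule Bochner_Integration.integral_cong[OF refl]) (simp add: f1_def L_def x_def Lik_split[OF v])
      have "(\<integral>\<omega>. (W * x \<omega> - X1) * L \<omega> \<partial>M) = (\<integral>\<omega>. W * (x \<omega> * L \<omega>) - X1 * L \<omega> \<partial>M)"
        by (rule Bochner_Integration.integral_cong[OF refl]) (simp add: algebra_simps)
      also have "\<dots> = W * X1 - X1 * W" using ixL iL by (simp add: X1_def W_def)
      finally have e0: "(\<integral>\<omega>. (W * x \<omega> - X1) * L \<omega> \<partial>M) = 0" by simp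
      have e2: "(\<integral>\<omega>. (W * x \<omega> - X1) * Gc \<omega> * L \<omega> \<partial>M)
          = (\<integral>\<omega>. f1 (mu i \<omega>) * (Gf ((rvec \<omega>)(i:=c)) * Lam h (rvec \<omega>)) \<partial>M)"
        by (rule Bochner_Integration.integral_cong[OF refl]) (simp add: f1_def L_def x_def Gc_def Lik_split[OF v] Gamma_rvec)
      have iLam: "integrable M (\<lambda>\<omega>. Lam h (rvec \<omega>))"
        by (rule int_bounded) (use Lam01[OF v] in auto)
      have iGLam: "integrable M (\<lambda>\<omega>. Gf ((rvec \<omega>)(i:=c)) * Lam h (rvec \<omega>))"
        by (rule int_bounded) (use Lam01[OF v] Gf01 in \<open>auto simp: abs_mult intro: mult_le_one\<close>)
      show ?thesis
      proof (cases "(\<integral>\<omega>. Lam h (rvec \<omega>) \<partial>M) = 0")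
        case True
        have "0 \<le> (\<integral>\<omega>. Gf ((rvec \<omega>)(i:=c)) * Lam h (rvec \<omega>) \<partial>M)"
          by (rule integral_nonneg_AE, rule AE_I2) (use Lam01[OF v] Gf01 in auto)
        moreover have "(\<integral>\<omega>. Gf ((rvec \<omega>)(i:=c)) * Lam h (rvec \<omega>) \<partial>M) \<le> (\<integral>\<omega>. Lam h (rvec \<omega>) \<partial>M)"
          by (rule integral_mono[OF iGLam iLam]) (use Lam01[OF v] Gf01 in \<open>auto intro: mult_left_le_one_le\<close>)
        ultimately have "(\<integral>\<omega>. Gf ((rvec \<omega>)(i:=c)) * Lam h (rvec \<omega>) \<partial>M) = 0" using True by simp
        then show ?thesis using e2 I2 by simp
      next
        case False
        then have "(\<integral>\<omega>. f1 (mu i \<omega>) \<partial>M) = 0" using I1 e1 e0 by simp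
        then show ?thesis using e2 I2 by simp
      qed
    qed
    have "\<sigma> * (W * Gx - X1 * G0) \<le> 0" using k1 k2 k3 by simp
    then show ?thesis by (simp add: algebra_simps)
  qed
  then show ?thesis by (simp add: Gx_def W_def G0_def X1_def G_def x_def L_def)
qed

end

context bandit begin

lemma sgn_other:
  assumes ij: "i \<noteq> j"
  shows "1 * ((y - c) * (Gf (m(i:=y)) - Gf (m(i:=c)))) \<le> 0"
proof (cases "c \<le> y")
  case True
  have "Gf (m(i:=y)) \<le> Gf (m(i:=c))"
    using best_arm_mono_other[OF K1 ij True, of m] by (auto simp: Gf_def indicator_def)
  then show ?thesis using True by (simp add: mult_nonneg_nonpos)
next
  case False
  then have cy: "y \<le> c" by simp
  have "Gf (m(i:=c)) \<le> Gf (m(i:=y))"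
    using best_arm_mono_other[OF K1 ij cy, of m] by (auto simp: Gf_def indicator_def)
  then show ?thesis using False by (simp add: mult_nonpos_nonneg)
qed

lemma sgn_self:
  assumes ij: "i = j"
  shows "(-1) * ((y - c) * (Gf (m(i:=y)) - Gf (m(i:=c)))) \<le> 0"
proof (cases "c \<le> y")
  case True
  have "Gf (m(i:=c)) \<le> Gf (m(i:=y))"
    using best_arm_mono_self[OF K1 True, of m i] ij by (auto simp: Gf_def indicator_def)
  then show ?thesis using True by simp
next
  case False
  then have cy: "y \<le> c" by simp
  have "Gf (m(i:=y)) \<le> Gf (m(i:=c))"
    using best_arm_mono_self[OF K1 cy, of m i] ij by (auto simp: Gf_def indicator_def)
  then show ?thesis using False by (simp add: mult_nonpos_nonpos)
qed

lemma valid_snoc: "valid (h @ [(a,b)]) \<longleftrightarrow> valid h \<and> a < K"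
  by (auto simp: valid_def)

lemma Lik_snoc: "Lik (h @ [p]) m = Lik h m * ell p m"
  unfolding Lik_def by (simp add: nth_append)

lemma lam_snoc: "a \<noteq> i \<Longrightarrow> lam (h @ [(a,b)]) = lam h"
proof -
  assume a: "a \<noteq> i"
  have "{..<length (h @ [(a,b)])} \<inter> {s. fst ((h @ [(a,b)])!s) = i} = {..<length h} \<inter> {s. fst (h!s) = i}"
    using a by (auto simp: nth_append less_Suc_eq)
  then show ?thesis unfolding lam_def fun_eq_iff
    by (auto intro!: prod.cong simp: nth_append)
qed

definition "Jm h = (\<integral>\<omega>. mu i \<omega> * Lik h (mvec \<omega>) \<partial>M)"
definition "Jg h = (\<integral>\<omega>. Gf (mvec \<omega>) * Lik h (mvec \<omega>) \<partial>M)"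
definition "J1 h = (\<integral>\<omega>. Lik h (mvec \<omega>) \<partial>M)"

lemma factor:
  fixes f :: "real \<Rightarrow> real"
  assumes v: "valid h" and f[measurable]: "f \<in> borel_measurable borel"
    and fb: "\<And>y. y \<in> {0..1} \<Longrightarrow> \<bar>f y\<bar> \<le> 1"
  shows "(\<integral>\<omega>. f (mu i \<omega>) * Lik h (mvec \<omega>) \<partial>M) = (\<integral>\<omega>. f (mu i \<omega>) * lam h (mu i \<omega>) \<partial>M) * (\<integral>\<omega>. Lam h (rvec \<omega>) \<partial>M)"
proof -
  have "(\<integral>\<omega>. f (mu i \<omega>) * Lik h (mvec \<omega>) \<partial>M) = (\<integral>\<omega>. (\<lambda>y. f y * lam h y) (mu i \<omega>) * Lam h (rvec \<omega>) \<partial>M)"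
    by (rule Bochner_Integration.integral_cong[OF refl]) (simp add: Lik_split[OF v])
  also have "\<dots> = (\<integral>\<omega>. (\<lambda>y. f y * lam h y) (mu i \<omega>) \<partial>M) * (\<integral>\<omega>. Lam h (rvec \<omega>) \<partial>M)"
  proof (rule IND[where Ba=1 and Bb=1])
    show "(\<lambda>y. f y * lam h y) \<in> borel_measurable borel" by measurable
    show "Lam h \<in> borel_measurable (PiM ({..<K} - {i}) (\<lambda>_. borel))" using v by measurable
    fix \<omega> assume w: "\<omega> \<in> space M"
    show "\<bar>f (mu i \<omega>) * lam h (mu i \<omega>)\<bar> \<le> 1"
      using fb[OF mu01[OF iK w]] lam01[OF mu01[OF iK w], of h] by (auto simp: abs_mult intro: mult_le_one)
    show "\<bar>Lam h (rvec \<omega>)\<bar> \<le> 1" using Lam01[OF v w] by simp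
  qed
  finally show ?thesis by simp
qed

lemma cross_eq:
  assumes v: "valid h" and a: "a < K" "a \<noteq> i"
  shows "Jm (h @ [(a,True)]) * J1 (h @ [(a,False)]) = Jm (h @ [(a,False)]) * J1 (h @ [(a,True)])"
proof -
  have v1: "valid (h @ [(a,b)])" for b using v a by (simp add: valid_snoc)
  have idm: "(\<lambda>y::real. y) \<in> borel_measurable borel" by simp
  have onem: "(\<lambda>y::real. 1) \<in> borel_measurable borel" by simp
  have m: "Jm (h @ [(a,b)]) = (\<integral>\<omega>. mu i \<omega> * lam h (mu i \<omega>) \<partial>M) * (\<integral>\<omega>. Lam (h @ [(a,b)]) (rvec \<omega>) \<partial>M)" for b
    using factor[OF v1 idm] lam_snoc[OF a(2)] by (simp add: Jm_def)
  have o: "J1 (h @ [(a,b)]) = (\<integral>\<omega>. lam h (mu i \<omega>) \<partial>M) * (\<integral>\<omega>. Lam (h @ [(a,b)]) (rvec \<omega>) \<partial>M)" for b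
    using factor[OF v1 onem] lam_snoc[OF a(2)] by (simp add: J1_def)
  show ?thesis unfolding m o by (simp add: algebra_simps)
qed


lemma ell_mvec: "a < K \<Longrightarrow> ell (a,True) (mvec \<omega>) = mu a \<omega>" "a < K \<Longrightarrow> ell (a,False) (mvec \<omega>) = 1 - mu a \<omega>"
  by (simp_all add: ell_def mvec_def)

lemma per_a:
  assumes v: "valid h" and a: "a < K"
  shows "(i \<noteq> j \<longrightarrow> (\<Sum>b\<in>UNIV. Jm (h@[(a,b)]) * Jg (h@[(a,b)]) / J1 (h@[(a,b)])) \<le> Jm h * Jg h / J1 h) \<and>
         (i = j \<longrightarrow> (\<Sum>b\<in>UNIV. Jm (h@[(a,b)]) * Jg (h@[(a,b)]) / J1 (h@[(a,b)])) \<ge> Jm h * Jg h / J1 h)"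
proof -
  have vb: "valid (h@[(a,b)])" for b using v a by (simp add: valid_snoc)
  define L where "L \<omega> = Lik h (mvec \<omega>)" for \<omega>
  have Lm[measurable]: "L \<in> borel_measurable M" unfolding L_def using v by measurable
  have L01: "0 \<le> L \<omega> \<and> L \<omega> \<le> 1" if "\<omega> \<in> space M" for \<omega> using Lik01[OF v that] by (simp add: L_def)
  have x01: "0 \<le> mu k \<omega> \<and> mu k \<omega> \<le> 1" if "\<omega> \<in> space M" "k < K" for \<omega> k using mu01[OF that(2,1)] by simp
  have G01: "0 \<le> Gf (mvec \<omega>) \<and> Gf (mvec \<omega>) \<le> 1" for \<omega> using Gf01 by simp
  have LT: "Lik (h@[(a,True)]) (mvec \<omega>) = L \<omega> * mu a \<omega>" for \<omega>
    using a by (simp add: Lik_snoc L_def ell_mvec)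
  have LF: "Lik (h@[(a,False)]) (mvec \<omega>) = L \<omega> * (1 - mu a \<omega>)" for \<omega>
    using a by (simp add: Lik_snoc L_def ell_mvec)
  have am[measurable]: "mu a \<in> borel_measurable M" using a by (rule mu_meas)
  have im[measurable]: "mu i \<in> borel_measurable M" using iK by (rule mu_meas)
  have ib: "integrable M f" if "f \<in> borel_measurable M" "\<And>\<omega>. \<omega> \<in> space M \<Longrightarrow> \<bar>f \<omega>\<bar> \<le> 1" for f :: "'a \<Rightarrow> real"
    by (rule int_bounded[OF that(1) that(2)])
  have b1: "\<bar>p * q\<bar> \<le> 1" if "0 \<le> p" "p \<le> 1" "0 \<le> q" "q \<le> 1" for p q :: real
    using that by (auto simp: abs_mult intro: mult_le_one)
  have sm: "Jm (h@[(a,False)]) + Jm (h@[(a,True)]) = Jm h"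
  proof -
    have i1: "integrable M (\<lambda>\<omega>. mu i \<omega> * (L \<omega> * (1 - mu a \<omega>)))"
      by (rule ib) (use L01 x01[OF _ iK] x01[OF _ a] in \<open>auto intro!: b1 mult_nonneg_nonneg mult_le_one\<close>)
    have i2: "integrable M (\<lambda>\<omega>. mu i \<omega> * (L \<omega> * mu a \<omega>))"
      by (rule ib) (use L01 x01[OF _ iK] x01[OF _ a] in \<open>auto intro!: b1 mult_nonneg_nonneg mult_le_one\<close>)
    have "Jm (h@[(a,False)]) + Jm (h@[(a,True)]) = (\<integral>\<omega>. mu i \<omega> * (L \<omega> * (1 - mu a \<omega>)) + mu i \<omega> * (L \<omega> * mu a \<omega>) \<partial>M)"
      unfolding Jm_def LT LF using i1 i2 by simp
    also have "\<dots> = Jm h" unfolding Jm_def L_def by (simp add: algebra_simps)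
    finally show ?thesis .
  qed
  have sg: "Jg (h@[(a,False)]) + Jg (h@[(a,True)]) = Jg h"
  proof -
    have i1: "integrable M (\<lambda>\<omega>. Gf (mvec \<omega>) * (L \<omega> * (1 - mu a \<omega>)))"
      by (rule ib) (use L01 G01 x01[OF _ a] in \<open>auto intro!: b1 mult_nonneg_nonneg mult_le_one\<close>)
    have i2: "integrable M (\<lambda>\<omega>. Gf (mvec \<omega>) * (L \<omega> * mu a \<omega>))"
      by (rule ib) (use L01 G01 x01[OF _ a] in \<open>auto intro!: b1 mult_nonneg_nonneg mult_le_one\<close>)
    have "Jg (h@[(a,False)]) + Jg (h@[(a,True)]) = (\<integral>\<omega>. Gf (mvec \<omega>) * (L \<omega> * (1 - mu a \<omega>)) + Gf (mvec \<omega>) * (L \<omega> * mu a \<omega>) \<partial>M)"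
      unfolding Jg_def LT LF using i1 i2 by simp
    also have "\<dots> = Jg h" unfolding Jg_def L_def by (simp add: algebra_simps)
    finally show ?thesis .
  qed
  have s1: "J1 (h@[(a,False)]) + J1 (h@[(a,True)]) = J1 h"
  proof -
    have i1: "integrable M (\<lambda>\<omega>. L \<omega> * (1 - mu a \<omega>))"
      by (rule ib) (use L01 x01[OF _ a] in \<open>auto intro!: b1 mult_nonneg_nonneg mult_le_one\<close>)
    have i2: "integrable M (\<lambda>\<omega>. L \<omega> * mu a \<omega>)"
      by (rule ib) (use L01 x01[OF _ a] in \<open>auto intro!: b1 mult_nonneg_nonneg mult_le_one\<close>)
    have "J1 (h@[(a,False)]) + J1 (h@[(a,True)]) = (\<integral>\<omega>. L \<omega> * (1 - mu a \<omega>) + L \<omega> * mu a \<omega> \<partial>M)"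
      unfolding J1_def LT LF using i1 i2 by simp
    also have "\<dots> = J1 h" unfolding J1_def L_def by (simp add: algebra_simps)
    finally show ?thesis .
  qed
  have bnd: "0 \<le> Jm (h@[(a,b)]) \<and> Jm (h@[(a,b)]) \<le> J1 (h@[(a,b)]) \<and> 0 \<le> Jg (h@[(a,b)]) \<and> Jg (h@[(a,b)]) \<le> J1 (h@[(a,b)])" for b
  proof -
    define L' where "L' \<omega> = Lik (h@[(a,b)]) (mvec \<omega>)" for \<omega>
    have L'm[measurable]: "L' \<in> borel_measurable M" unfolding L'_def using vb by measurable
    have L'01: "0 \<le> L' \<omega> \<and> L' \<omega> \<le> 1" if "\<omega> \<in> space M" for \<omega> using Lik01[OF vb that] by (simp add: L'_def)
    have iL: "integrable M L'" by (rule ib) (use L'01 in auto)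
    have iM: "integrable M (\<lambda>\<omega>. mu i \<omega> * L' \<omega>)" by (rule ib) (use L'01 x01[OF _ iK] in \<open>auto intro!: b1 mult_nonneg_nonneg mult_le_one\<close>)
    have iG: "integrable M (\<lambda>\<omega>. Gf (mvec \<omega>) * L' \<omega>)" by (rule ib) (use L'01 G01 in \<open>auto intro!: b1 mult_nonneg_nonneg mult_le_one\<close>)
    have "0 \<le> (\<integral>\<omega>. mu i \<omega> * L' \<omega> \<partial>M)" by (rule integral_nonneg_AE, rule AE_I2) (use L'01 x01[OF _ iK] in auto)
    moreover have "(\<integral>\<omega>. mu i \<omega> * L' \<omega> \<partial>M) \<le> (\<integral>\<omega>. L' \<omega> \<partial>M)"
      by (rule integral_mono[OF iM iL]) (use L'01 x01[OF _ iK] in \<open>auto intro: mult_left_le_one_le\<close>)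
    moreover have "0 \<le> (\<integral>\<omega>. Gf (mvec \<omega>) * L' \<omega> \<partial>M)" by (rule integral_nonneg_AE, rule AE_I2) (use L'01 G01 in auto)
    moreover have "(\<integral>\<omega>. Gf (mvec \<omega>) * L' \<omega> \<partial>M) \<le> (\<integral>\<omega>. L' \<omega> \<partial>M)"
      by (rule integral_mono[OF iG iL]) (use L'01 G01 in \<open>auto intro: mult_left_le_one_le\<close>)
    ultimately show ?thesis by (simp add: Jm_def Jg_def J1_def L'_def)
  qed
  define u1 where "u1 = Jm (h@[(a,True)])"
  define u0 where "u0 = Jm (h@[(a,False)])"
  define v1 where "v1 = Jg (h@[(a,True)])"
  define v0 where "v0 = Jg (h@[(a,False)])"
  define w1 where "w1 = J1 (h@[(a,True)])"
  define w0 where "w0 = J1 (h@[(a,False)])"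
  have key: "(i \<noteq> j \<longrightarrow> (u1 * w0 - u0 * w1) * (v1 * w0 - v0 * w1) \<le> 0) \<and>
             (i = j \<longrightarrow> (u1 * w0 - u0 * w1) * (v1 * w0 - v0 * w1) \<ge> 0)"
  proof (cases "a = i")
    case False
    have "u1 * w0 = u0 * w1" using cross_eq[OF v a False] by (simp add: u1_def u0_def w1_def w0_def)
    then show ?thesis by simp
  next
    case True
    have w0e: "w0 = J1 h - w1" using s1 unfolding w0_def w1_def by linarith
    have u0e: "u0 = Jm h - u1" using sm unfolding u0_def u1_def by linarith
    have v0e: "v0 = Jg h - v1" using sg unfolding v0_def v1_def by linarith
    have e1: "u1 * w0 - u0 * w1 = u1 * J1 h - Jm h * w1"
      unfolding w0e u0e by (simp add: algebra_simps)
    have e2: "v1 * w0 - v0 * w1 = v1 * J1 h - Jg h * w1"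
      unfolding w0e v0e by (simp add: algebra_simps)
    have LTi: "Lik (h@[(i,True)]) (mvec \<omega>) = L \<omega> * mu i \<omega>" for \<omega> using LT[of \<omega>] True by simp
    have u1e: "u1 = (\<integral>\<omega>. mu i \<omega> * mu i \<omega> * Lik h (mvec \<omega>) \<partial>M)"
      unfolding u1_def Jm_def True LTi by (simp add: L_def algebra_simps)
    have w1e: "w1 = Jm h"
      unfolding w1_def J1_def Jm_def True LTi by (simp add: L_def algebra_simps)
    have v1e: "v1 = (\<integral>\<omega>. Gf (mvec \<omega>) * mu i \<omega> * Lik h (mvec \<omega>) \<partial>M)"
      unfolding v1_def Jg_def True LTi by (simp add: L_def algebra_simps)
    have "u1 * J1 h - Jm h * w1 \<ge> 0"
      unfolding u1e w1e using varpos[OF v] by (simp add: J1_def Jm_def power2_eq_square)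
    then have f1: "u1 * w0 - u0 * w1 \<ge> 0" using e1 by simp
    have f2o: "v1 * w0 - v0 * w1 \<le> 0" if ij: "i \<noteq> j"
    proof -
      have "v1 * J1 h - Jg h * w1 \<le> 0"
        unfolding v1e w1e using cov_generic[OF v sgn_other[OF ij]] by (simp add: J1_def Jm_def Jg_def)
      then show ?thesis using e2 by simp
    qed
    have f2s: "v1 * w0 - v0 * w1 \<ge> 0" if ij: "i = j"
    proof -
      have "v1 * J1 h - Jg h * w1 \<ge> 0"
        unfolding v1e w1e using cov_generic[OF v sgn_self[OF ij]] by (simp add: J1_def Jm_def Jg_def)
      then show ?thesis using e2 by simp
    qed
    show ?thesis using f1 f2o f2s by (auto intro: mult_nonneg_nonpos mult_nonneg_nonneg)
  qed
  have sumb: "(\<Sum>b\<in>UNIV. Jm (h@[(a,b)]) * Jg (h@[(a,b)]) / J1 (h@[(a,b)])) = u0 * v0 / w0 + u1 * v1 / w1"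
    by (simp add: UNIV_bool u0_def u1_def v0_def v1_def w0_def w1_def)
  have rhs: "Jm h * Jg h / J1 h = (u0 + u1) * (v0 + v1) / (w0 + w1)"
    using sm sg s1 by (simp add: u0_def u1_def v0_def v1_def w0_def w1_def)
  have B: "0 \<le> u0" "u0 \<le> w0" "0 \<le> u1" "u1 \<le> w1" "0 \<le> v0" "v0 \<le> w0" "0 \<le> v1" "v1 \<le> w1"
    using bnd[of False] bnd[of True] by (simp_all add: u0_def u1_def v0_def v1_def w0_def w1_def)
  show ?thesis unfolding sumb rhs
    using key two_point_le[OF B] two_point_ge[OF B] by auto
qed

end

context bandit begin

definition "PA h = (\<integral>\<omega>. mu i \<omega> * indicator (E h) \<omega> \<partial>M)"
definition "PG h = (\<integral>\<omega>. Gf (mvec \<omega>) * indicator (E h) \<omega> \<partial>M)"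
definition "PP h = prob (E h)"
definition "Hh h = PA h / PP h * (PG h / PP h)"

lemma PA_star: "valid h \<Longrightarrow> PA h = Q h * Jm h"
proof -
  assume v: "valid h"
  have f: "(\<lambda>m::nat\<Rightarrow>real. m i) \<in> borel_measurable (PiM {..<K} (\<lambda>_. borel))"
    by (rule measurable_component_singleton) (use iK in simp)
  have mi: "mvec \<omega> i = mu i \<omega>" for \<omega> using iK by (simp add: mvec_def)
  show ?thesis using star[OF v f] mu01[OF iK] by (simp add: PA_def Jm_def mi)
qed

lemma PG_star: "valid h \<Longrightarrow> PG h = Q h * Jg h"
proof -
  assume v: "valid h"
  show ?thesis using star[OF v Gf_meas] Gf01 by (simp add: PG_def Jg_def)
qed

lemma PP_star: "valid h \<Longrightarrow> PP h = Q h * J1 h"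
proof -
  assume v: "valid h"
  have f: "(\<lambda>m::nat\<Rightarrow>real. 1) \<in> borel_measurable (PiM {..<K} (\<lambda>_. borel))" by simp
  have "PP h = (\<integral>\<omega>. 1 * indicator (E h) \<omega> \<partial>M)" by (simp add: PP_def)
  then show ?thesis using star[OF v f] by (simp add: J1_def)
qed

lemma Aset_snoc: "Aset (h @ [(a,b)]) = {r \<in> Aset h. alg (Suc (length h)) h r = a}"
  unfolding Aset_def by (auto simp: nth_append less_Suc_eq)

lemma Q_snoc: "Q (h @ [(a,b)]) = prob {\<omega>\<in>space M. R \<omega> \<in> Aset h \<and> alg (Suc (length h)) h (R \<omega>) = a}"
  unfolding Q_def Aset_snoc by (rule arg_cong[where f=prob]) auto

lemma Q_sum: "(\<Sum>a<K. Q (h @ [(a,b)])) = Q h"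
proof -
  define A where "A a = {\<omega>\<in>space M. R \<omega> \<in> Aset h \<and> alg (Suc (length h)) h (R \<omega>) = a}" for a
  have As: "A a \<in> events" for a
  proof -
    have "A a = {\<omega>\<in>space M. R \<omega> \<in> Aset (h @ [(a,b)])}" unfolding A_def Aset_snoc by auto
    then show ?thesis using R_set by simp
  qed
  have "(\<Sum>a<K. Q (h @ [(a,b)])) = (\<Sum>a<K. prob (A a))" by (simp add: Q_snoc A_def)
  also have "\<dots> = prob (\<Union>a<K. A a)"
    apply (rule finite_measure_finite_Union[symmetric])
      apply simp
     apply (use As in blast)
    apply (auto simp: disjoint_family_on_def A_def)
    done
  also have "(\<Union>a<K. A a) = {\<omega>\<in>space M. R \<omega> \<in> Aset h}"
    using algK by (auto simp: A_def)
  finally show ?thesis by (simp add: Q_def)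
qed

lemma Q_nonneg: "Q h \<ge> 0" by (simp add: Q_def)

lemma qcancel: "(q * x) * (q * y) / (q * z) = q * (x * y / z)" for q x y z :: real
  by (cases "q = 0") (auto simp: field_simps)

lemma step_ineq:
  assumes v: "valid h"
  shows "(i \<noteq> j \<longrightarrow> (\<Sum>a<K. \<Sum>b\<in>UNIV. PA (h@[(a,b)]) * PG (h@[(a,b)]) / PP (h@[(a,b)])) \<le> PA h * PG h / PP h) \<and>
         (i = j \<longrightarrow> (\<Sum>a<K. \<Sum>b\<in>UNIV. PA (h@[(a,b)]) * PG (h@[(a,b)]) / PP (h@[(a,b)])) \<ge> PA h * PG h / PP h)"
proof -
  have vb: "valid (h@[(a,b)])" if "a < K" for a b using v that by (simp add: valid_snoc)
  define q where "q a = Q (h @ [(a,True)])" for a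
  have qb: "Q (h @ [(a,b)]) = q a" for a b by (simp add: q_def Q_snoc)
  have lhs: "(\<Sum>a<K. \<Sum>b\<in>UNIV. PA (h@[(a,b)]) * PG (h@[(a,b)]) / PP (h@[(a,b)]))
      = (\<Sum>a<K. q a * (\<Sum>b\<in>UNIV. Jm (h@[(a,b)]) * Jg (h@[(a,b)]) / J1 (h@[(a,b)])))"
    by (intro sum.cong refl) (simp add: PA_star PG_star PP_star vb qb qcancel sum_distrib_left)
  have rhs: "PA h * PG h / PP h = (\<Sum>a<K. q a * (Jm h * Jg h / J1 h))"
  proof -
    have "(\<Sum>a<K. q a) = Q h" using Q_sum[of h True] by (simp add: q_def)
    then have s: "(\<Sum>a<K. q a * c) = Q h * c" for c by (simp add: sum_distrib_right[symmetric])
    have "PA h * PG h / PP h = Q h * (Jm h * Jg h / J1 h)" using v by (simp add: PA_star PG_star PP_star qcancel)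
    then show ?thesis by (simp only: s)
  qed
  have q0: "q a \<ge> 0" for a by (simp add: q_def Q_nonneg)
  show ?thesis unfolding lhs rhs
  proof (intro conjI impI)
    assume ij: "i \<noteq> j"
    show "(\<Sum>a<K. q a * (\<Sum>b\<in>UNIV. Jm (h@[(a,b)]) * Jg (h@[(a,b)]) / J1 (h@[(a,b)]))) \<le> (\<Sum>a<K. q a * (Jm h * Jg h / J1 h))"
    proof (rule sum_mono, rule mult_left_mono)
      fix a assume "a \<in> {..<K}"
      then show "(\<Sum>b\<in>UNIV. Jm (h@[(a,b)]) * Jg (h@[(a,b)]) / J1 (h@[(a,b)])) \<le> Jm h * Jg h / J1 h"
        using per_a[OF v, of a] ij by simp
      show "0 \<le> q a" by (rule q0)
    qed
  next
    assume ij: "i = j"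
    show "(\<Sum>a<K. q a * (\<Sum>b\<in>UNIV. Jm (h@[(a,b)]) * Jg (h@[(a,b)]) / J1 (h@[(a,b)]))) \<ge> (\<Sum>a<K. q a * (Jm h * Jg h / J1 h))"
    proof (rule sum_mono, rule mult_left_mono)
      fix a assume "a \<in> {..<K}"
      then show "(\<Sum>b\<in>UNIV. Jm (h@[(a,b)]) * Jg (h@[(a,b)]) / J1 (h@[(a,b)])) \<ge> Jm h * Jg h / J1 h"
        using per_a[OF v, of a] ij by simp
      show "0 \<le> q a" by (rule q0)
    qed
  qed
qed

end

context bandit begin

definition "VA n = vimage_algebra (space M) (hist n) (count_space UNIV)"

lemma hist_in_S: "hist n \<omega> \<in> {h. set h \<subseteq> {..<K} \<times> UNIV \<and> length h = n}"
  using hist_valid[of n \<omega>] by (auto simp: valid_def hist_def)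

lemma fin_S: "finite {h :: (nat \<times> bool) list. set h \<subseteq> {..<K} \<times> UNIV \<and> length h = n}"
  by (rule finite_lists_length_eq) simp

lemma E_hist: "{x\<in>space M. hist n x = hist n \<omega>} = E (hist n \<omega>)"
  unfolding E_def by (simp add: hist_def)

lemma ce_eq:
  assumes X: "integrable M X"
  shows "AE \<omega> in M. real_cond_exp M (VA n) X \<omega> = (\<integral>x. X x * indicator (E (hist n \<omega>)) x \<partial>M) / PP (hist n \<omega>)"
  using cond_exp_discrete[OF hist_meas fin_S hist_in_S X] unfolding VA_def E_hist PP_def .

lemma PA_bnd: "0 \<le> PA h \<and> PA h \<le> PP h"
proof -
  have iE: "integrable M (\<lambda>\<omega>. indicator (E h) \<omega> :: real)" by (simp add: emeasure_eq_measure)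
  have i2: "integrable M (\<lambda>\<omega>. mu i \<omega> * indicator (E h) \<omega>)"
    by (rule int_bounded) (use iK mu01[OF iK] in \<open>auto simp: indicator_def\<close>)
  have "0 \<le> PA h" unfolding PA_def by (rule integral_nonneg_AE, rule AE_I2) (use mu01[OF iK] in \<open>auto simp: indicator_def\<close>)
  moreover have "PA h \<le> (\<integral>\<omega>. indicator (E h) \<omega> \<partial>M)" unfolding PA_def
    by (rule integral_mono[OF i2 iE]) (use mu01[OF iK] in \<open>auto simp: indicator_def\<close>)
  ultimately show ?thesis by (simp add: PP_def)
qed

lemma PG_bnd: "0 \<le> PG h \<and> PG h \<le> PP h"
proof -
  have iE: "integrable M (\<lambda>\<omega>. indicator (E h) \<omega> :: real)" by (simp add: emeasure_eq_measure)
  have i2: "integrable M (\<lambda>\<omega>. Gf (mvec \<omega>) * indicator (E h) \<omega>)"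
    by (rule int_bounded) (use Gf01 in \<open>auto simp: indicator_def\<close>)
  have "0 \<le> PG h" unfolding PG_def by (rule integral_nonneg_AE, rule AE_I2) (use Gf01 in \<open>auto simp: indicator_def\<close>)
  moreover have "PG h \<le> (\<integral>\<omega>. indicator (E h) \<omega> \<partial>M)" unfolding PG_def
    by (rule integral_mono[OF i2 iE]) (use Gf01 in \<open>auto simp: indicator_def\<close>)
  ultimately show ?thesis by (simp add: PP_def)
qed

lemma ratio01: "0 \<le> x \<Longrightarrow> x \<le> p \<Longrightarrow> 0 \<le> x / p \<and> x / p \<le> (1::real)"
  by (cases "p = 0") (auto simp: divide_le_eq_1)

lemma Hh_bnd: "\<bar>Hh h\<bar> \<le> 1"
proof -
  have A: "0 \<le> PA h / PP h \<and> PA h / PP h \<le> 1" using PA_bnd by (intro ratio01) auto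
  have B: "0 \<le> PG h / PP h \<and> PG h / PP h \<le> 1" using PG_bnd by (intro ratio01) auto
  have c1: "0 \<le> (PA h / PP h) * (PG h / PP h)" by (rule mult_nonneg_nonneg) (use A B in blast)+
  have c2: "(PA h / PP h) * (PG h / PP h) \<le> 1" by (rule mult_le_one) (use A B in blast)+
  show ?thesis unfolding Hh_def by (simp only: abs_of_nonneg[OF c1]) (rule c2)
qed

lemma Hh_hist_meas[measurable]: "(\<lambda>\<omega>. Hh (hist n \<omega>)) \<in> borel_measurable M"
  by (rule measurable_compose[OF hist_meas]) simp

lemma Hh_hist_int: "integrable M (\<lambda>\<omega>. Hh (hist n \<omega>))"
  by (rule int_bounded[OF Hh_hist_meas]) (rule Hh_bnd)

lemma hist_Suc: "hist (Suc n) x = hist n x @ [(alg (Suc n) (hist n x) (R x),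
    Z (alg (Suc n) (hist n x) (R x)) (length (filter (\<lambda>p. fst p = alg (Suc n) (hist n x) (R x)) (hist n x))) x)]"
  by (simp add: hist_def Let_def)

lemma decomp:
  assumes v: "valid h" and n: "length h = n"
  shows "(\<integral>x. Hh (hist (Suc n) x) * indicator (E h) x \<partial>M) = (\<Sum>a<K. \<Sum>b\<in>UNIV. Hh (h@[(a,b)]) * PP (h@[(a,b)]))"
proof -
  have pt: "Hh (hist (Suc n) x) * indicator (E h) x = (\<Sum>a<K. \<Sum>b\<in>UNIV. Hh (h@[(a,b)]) * indicator (E (h@[(a,b)])) x)"
    if x: "x \<in> space M" for x
  proof (cases "x \<in> E h")
    case True
    then have hn: "hist n x = h" using n by (simp add: E_def)
    obtain a0 b0 where hs: "hist (Suc n) x = h @ [(a0,b0)]" and a0: "a0 < K"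
      using hist_Suc[of n x] hn algK by auto
    have ind: "indicator (E (h@[(a,b)])) x = (if a = a0 \<and> b = b0 then 1 else (0::real))" for a b
      using x hs n by (auto simp: E_def indicator_def)
    have "(\<Sum>a<K. \<Sum>b\<in>UNIV. Hh (h@[(a,b)]) * indicator (E (h@[(a,b)])) x)
        = (\<Sum>a<K. if a = a0 then Hh (h@[(a,b0)]) else 0)"
      by (intro sum.cong refl) (cases b0, auto simp: ind UNIV_bool)
    also have "\<dots> = Hh (h@[(a0,b0)])" using a0 by simp
    finally show ?thesis using True hs by simp
  next
    case False
    have "x \<notin> E (h@[(a,b)])" for a b
    proof
      assume "x \<in> E (h@[(a,b)])"
      then have "hist (Suc n) x = h @ [(a,b)]" using n by (simp add: E_def)
      then have "hist n x = h" using hist_Suc_butlast[of alg "\<lambda>a n. Z a n x" "R x" n] by (simp add: hist_def)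
      then show False using False x n by (simp add: E_def)
    qed
    then show ?thesis using False by simp
  qed
  have ii: "integrable M (\<lambda>x. Hh (h@[(a,b)]) * indicator (E (h@[(a,b)])) x :: real)" for a b
    apply (rule integrable_mult_right)
    apply (rule integrable_real_indicator)
    apply (simp_all add: emeasure_eq_measure)
    done
  have "(\<integral>x. Hh (hist (Suc n) x) * indicator (E h) x \<partial>M) =
        (\<integral>x. (\<Sum>a<K. \<Sum>b\<in>UNIV. Hh (h@[(a,b)]) * indicator (E (h@[(a,b)])) x) \<partial>M)"
    by (rule Bochner_Integration.integral_cong[OF refl]) (rule pt)
  also have "\<dots> = (\<Sum>a<K. \<integral>x. (\<Sum>b\<in>UNIV. Hh (h@[(a,b)]) * indicator (E (h@[(a,b)])) x) \<partial>M)"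
    by (rule Bochner_Integration.integral_sum) (rule Bochner_Integration.integrable_sum, rule ii)
  also have "\<dots> = (\<Sum>a<K. \<Sum>b\<in>UNIV. \<integral>x. Hh (h@[(a,b)]) * indicator (E (h@[(a,b)])) x \<partial>M)"
    by (intro sum.cong refl Bochner_Integration.integral_sum ii)
  also have "\<dots> = (\<Sum>a<K. \<Sum>b\<in>UNIV. Hh (h@[(a,b)]) * PP (h@[(a,b)]))"
    by (intro sum.cong refl) (simp add: PP_def emeasure_eq_measure)
  finally show ?thesis .
qed

lemma HP: "Hh h * PP h = PA h * PG h / PP h"
  by (cases "PP h = 0") (auto simp: Hh_def field_simps power2_eq_square)

lemma mart_step:
  "(i \<noteq> j \<longrightarrow> (AE \<omega> in M. real_cond_exp M (VA n) (\<lambda>\<omega>. Hh (hist (Suc n) \<omega>)) \<omega> \<le> Hh (hist n \<omega>))) \<and>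
   (i = j \<longrightarrow> (AE \<omega> in M. real_cond_exp M (VA n) (\<lambda>\<omega>. Hh (hist (Suc n) \<omega>)) \<omega> \<ge> Hh (hist n \<omega>)))"
proof -
  have ae: "AE \<omega> in M. real_cond_exp M (VA n) (\<lambda>\<omega>. Hh (hist (Suc n) \<omega>)) \<omega> =
      (\<Sum>a<K. \<Sum>b\<in>UNIV. PA (hist n \<omega> @ [(a,b)]) * PG (hist n \<omega> @ [(a,b)]) / PP (hist n \<omega> @ [(a,b)])) / PP (hist n \<omega>)"
    using ce_eq[OF Hh_hist_int, of n "Suc n"]
  proof eventually_elim
    case (elim \<omega>)
    have v: "valid (hist n \<omega>)" by (rule hist_valid)
    have l: "length (hist n \<omega>) = n" by (simp add: hist_def)
    show ?case using elim decomp[OF v l] by (simp add: HP)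
  qed
  have Hd: "Hh h = (PA h * PG h / PP h) / PP h" for h
    by (simp add: Hh_def)
  have pp: "PP h \<ge> 0" for h by (simp add: PP_def)
  show ?thesis
  proof (intro conjI impI)
    assume ij: "i \<noteq> j"
    show "AE \<omega> in M. real_cond_exp M (VA n) (\<lambda>\<omega>. Hh (hist (Suc n) \<omega>)) \<omega> \<le> Hh (hist n \<omega>)"
      using ae
    proof eventually_elim
      case (elim \<omega>)
      show ?case unfolding elim Hd[of "hist n \<omega>"]
        by (rule divide_right_mono[OF _ pp]) (use step_ineq[OF hist_valid[of n \<omega>]] ij in simp)
    qed
  next
    assume ij: "i = j"
    show "AE \<omega> in M. real_cond_exp M (VA n) (\<lambda>\<omega>. Hh (hist (Suc n) \<omega>)) \<omega> \<ge> Hh (hist n \<omega>)"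
      using ae
    proof eventually_elim
      case (elim \<omega>)
      show ?case unfolding elim Hd[of "hist n \<omega>"]
        by (rule divide_right_mono[OF _ pp]) (use step_ineq[OF hist_valid[of n \<omega>]] ij in simp)
    qed
  qed
qed

end

context bandit begin

definition "HH n \<omega> = real_cond_exp M (VA n) (mu i) \<omega> * real_cond_exp M (VA n) (\<lambda>\<omega>. Gf (mvec \<omega>)) \<omega>"

lemma HH_meas: "HH n \<in> borel_measurable (VA n)"
  unfolding HH_def[abs_def] by measurable

lemma HH_meas2[measurable]: "HH n \<in> borel_measurable M"
  unfolding HH_def[abs_def] by measurable

lemma HH_ae: "AE \<omega> in M. HH n \<omega> = Hh (hist n \<omega>)"
proof -
  have i1: "integrable M (mu i)" by (rule int_bounded) (use iK mu01[OF iK] in auto)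
  have i2: "integrable M (\<lambda>\<omega>. Gf (mvec \<omega>))" by (rule int_bounded) (use Gf01 in auto)
  show ?thesis using ce_eq[OF i1, of n] ce_eq[OF i2, of n]
    by eventually_elim (simp add: HH_def Hh_def PA_def PG_def)
qed

lemma VA_sub: "subalgebra M (VA n)"
  unfolding subalgebra_def VA_def using sets_image_in_sets[OF refl hist_meas] by auto

lemma VA_mono: "sets (VA n) \<subseteq> sets (VA (Suc n))"
proof -
  have m: "hist (Suc n) \<in> measurable (VA (Suc n)) (count_space UNIV)"
    unfolding VA_def by (rule measurable_vimage_algebra1) simp
  have "(\<lambda>\<omega>. butlast (hist (Suc n) \<omega>)) \<in> measurable (VA (Suc n)) (count_space UNIV)"
    by (rule measurable_compose[OF m]) simp
  moreover have "butlast (hist (Suc n) \<omega>) = hist n \<omega>" for \<omega>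
    unfolding hist_def by (rule hist_Suc_butlast)
  ultimately have "hist n \<in> measurable (VA (Suc n)) (count_space UNIV)" by simp
  then show ?thesis unfolding VA_def[of n] by (rule sets_image_in_sets[rotated]) (simp add: VA_def)
qed

lemma final:
  "(i \<noteq> j \<longrightarrow> supermartingale M (\<lambda>t. VA (t - 1)) T (\<lambda>t. HH (t - 1))) \<and>
   (i = j \<longrightarrow> submartingale M (\<lambda>t. VA (t - 1)) T (\<lambda>t. HH (t - 1)))"
proof -
  have filt: "is_filtration M (\<lambda>t. VA (t - 1)) T"
    unfolding is_filtration_def
  proof (intro conjI ballI)
    fix t show "subalgebra M (VA (t - 1))" by (rule VA_sub)
  next
    fix t assume "t \<in> {1..<T}"
    then have "t = Suc (t - 1)" by auto
    then show "sets (VA (t - 1)) \<subseteq> sets (VA (Suc t - 1))" using VA_mono[of "t - 1"] by simp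
  qed
  have mi: "integrable M (HH n) \<and> HH n \<in> borel_measurable (VA n)" for n
  proof
    show "integrable M (HH n)"
      by (rule integrable_cong_AE_imp[OF Hh_hist_int[of n] HH_meas2]) (use HH_ae[of n] in \<open>auto elim: AE_mp\<close>)
    show "HH n \<in> borel_measurable (VA n)" by (rule HH_meas)
  qed
  have ce: "AE \<omega> in M. real_cond_exp M (VA n) (HH (Suc n)) \<omega> = real_cond_exp M (VA n) (\<lambda>\<omega>. Hh (hist (Suc n) \<omega>)) \<omega>" for n
  proof -
    interpret S: finite_measure_subalgebra M "VA n" by unfold_locales (rule VA_sub)
    show ?thesis by (rule S.real_cond_exp_cong[OF HH_ae HH_meas2 Hh_hist_meas])
  qed
  have sup: "AE \<omega> in M. real_cond_exp M (VA n) (HH (Suc n)) \<omega> \<le> HH n \<omega>" if ij: "i \<noteq> j" for n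
  proof -
    have ms: "AE \<omega> in M. real_cond_exp M (VA n) (\<lambda>\<omega>. Hh (hist (Suc n) \<omega>)) \<omega> \<le> Hh (hist n \<omega>)"
      using mart_step[of n] ij by simp
    show ?thesis using ce[of n] HH_ae[of n] ms by eventually_elim auto
  qed
  have sub: "AE \<omega> in M. real_cond_exp M (VA n) (HH (Suc n)) \<omega> \<ge> HH n \<omega>" if ij: "i = j" for n
  proof -
    have ms: "AE \<omega> in M. real_cond_exp M (VA n) (\<lambda>\<omega>. Hh (hist (Suc n) \<omega>)) \<omega> \<ge> Hh (hist n \<omega>)"
      using mart_step[of n] ij by simp
    show ?thesis using ce[of n] HH_ae[of n] ms by eventually_elim auto
  qed
  show ?thesis
  proof (intro conjI impI)
    assume ij: "i \<noteq> j"
    show "supermartingale M (\<lambda>t. VA (t - 1)) T (\<lambda>t. HH (t - 1))"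
      unfolding supermartingale_def
    proof (intro conjI ballI filt)
      fix t show "integrable M (HH (t - 1))" "HH (t - 1) \<in> borel_measurable (VA (t - 1))" using mi by auto
    next
      fix t assume "t \<in> {1..<T}"
      then have "t = Suc (t - 1)" by auto
      then show "AE \<omega> in M. real_cond_exp M (VA (t - 1)) (HH (Suc t - 1)) \<omega> \<le> HH (t - 1) \<omega>"
        using sup[OF ij, of "t - 1"] by simp
    qed
  next
    assume ij: "i = j"
    show "submartingale M (\<lambda>t. VA (t - 1)) T (\<lambda>t. HH (t - 1))"
      unfolding submartingale_def
    proof (intro conjI ballI filt)
      fix t show "integrable M (HH (t - 1))" "HH (t - 1) \<in> borel_measurable (VA (t - 1))" using mi by auto
    next
      fix t assume "t \<in> {1..<T}"
      then have "t = Suc (t - 1)" by auto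
      then show "AE \<omega> in M. real_cond_exp M (VA (t - 1)) (HH (Suc t - 1)) \<omega> \<ge> HH (t - 1) \<omega>"
        using sub[OF ij, of "t - 1"] by simp
    qed
  qed
qed

end

theorem lemma3p6:
  fixes M :: "'a measure" and N :: "'r measure"
    and K T i j :: nat
    and mu :: "nat \<Rightarrow> 'a \<Rightarrow> real"
    and Z :: "nat \<Rightarrow> nat \<Rightarrow> 'a \<Rightarrow> bool"
    and R :: "'a \<Rightarrow> 'r"
    and alg :: "nat \<Rightarrow> (nat \<times> bool) list \<Rightarrow> 'r \<Rightarrow> nat"
  assumes "prob_space M"
    and "K \<ge> 1" and "i < K" and "j < K"
    \<comment> \<open>means: independent, [0,1]-valued (priors P_k = distributions of mu k, arbitrary)\<close>
    and "\<And>k. k < K \<Longrightarrow> mu k \<in> borel_measurable M"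
    and "\<And>k \<omega>. k < K \<Longrightarrow> \<omega> \<in> space M \<Longrightarrow> mu k \<omega> \<in> {0..1}"
    and "prob_space.indep_vars M (\<lambda>_. borel) mu {..<K}"
    \<comment> \<open>samples: given the means, independent with Z k n ~ Bernoulli(mu k)\<close>
    and "\<And>k n. k < K \<Longrightarrow> Z k n \<in> measurable M (count_space UNIV)"
    and "\<And>S (b :: nat \<times> nat \<Rightarrow> bool). finite S \<Longrightarrow> S \<subseteq> {..<K} \<times> UNIV \<Longrightarrow>
           AE \<omega> in M.
             real_cond_exp M
               (vimage_algebra (space M) (\<lambda>\<omega>. restrict (\<lambda>k. mu k \<omega>) {..<K}) (PiM {..<K} (\<lambda>_. borel)))
               (indicator {\<omega>\<in>space M. \<forall>p\<in>S. Z (fst p) (snd p) \<omega> = b p}) \<omega>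
             = (\<Prod>p\<in>S. if b p then mu (fst p) \<omega> else 1 - mu (fst p) \<omega>)"
    \<comment> \<open>algorithm: arm in round s is alg s (past history) (internal seed R), seed independent of environment\<close>
    and "R \<in> measurable M N"
    and "\<And>s h. alg s h \<in> measurable N (count_space UNIV)"
    and "\<And>s h r. alg s h r < K"
    and "prob_space.indep_set M (sets (vimage_algebra (space M) R N))
           (sets (vimage_algebra (space M)
              (\<lambda>\<omega>. (restrict (\<lambda>k. mu k \<omega>) {..<K}, restrict (\<lambda>p. Z (fst p) (snd p) \<omega>) ({..<K} \<times> UNIV)))
              (PiM {..<K} (\<lambda>_. borel) \<Otimes>\<^sub>M PiM ({..<K} \<times> UNIV) (\<lambda>_. count_space UNIV))))"
  defines "F \<equiv> bandit_filtration M alg Z R"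
    and "H \<equiv> (\<lambda>t \<omega>. real_cond_exp M (bandit_filtration M alg Z R t) (mu i) \<omega> *
                    real_cond_exp M (bandit_filtration M alg Z R t) (\<lambda>\<omega>. indicator {\<omega>. best_arm (\<lambda>k. mu k \<omega>) K = j} \<omega>) \<omega>)"
  shows "(i \<noteq> j \<longrightarrow> supermartingale M F T H) \<and> (i = j \<longrightarrow> submartingale M F T H)"
proof -
  interpret B: bandit M N K i j mu Z R alg
    using assms(1-14) by (intro bandit.intro bandit_axioms.intro) auto
  have bf: "bandit_filtration M alg Z R t = B.VA (t - 1)" for t
    unfolding bandit_filtration_def B.VA_def B.hist_def[abs_def] by simp
  have Feq: "F = (\<lambda>t. B.VA (t - 1))"
    unfolding F_def by (simp add: fun_eq_iff bf)
  have g: "(\<lambda>\<omega>. indicator {\<omega>. best_arm (\<lambda>k. mu k \<omega>) K = j} \<omega> :: real) = (\<lambda>\<omega>. B.Gf (B.mvec \<omega>))"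
  proof
    fix \<omega>
    have "best_arm (\<lambda>k. mu k \<omega>) K = best_arm (B.mvec \<omega>) K"
      by (rule best_arm_cong) (simp add: B.mvec_def)
    then show "indicator {\<omega>. best_arm (\<lambda>k. mu k \<omega>) K = j} \<omega> = B.Gf (B.mvec \<omega>)"
      by (simp add: B.Gf_def indicator_def)
  qed
  have Heq: "H = (\<lambda>t. B.HH (t - 1))"
    unfolding H_def bf g by (simp add: fun_eq_iff B.HH_def)
  show ?thesis unfolding Feq Heq by (rule B.final)
qed


end
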